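(* Let $Z=\mathbb R$ or $Z=\mathbb Z$, and take the KdV dispersion relations $h_1(\xi)=h_2(\xi)=h_3(\xi)=\xi^3$. Let $H,N_1,N_2,N_3,L_1,L_2,L_3>0$ satisfy $$N_{max}\sim N_{med},\qquad L_{max}\sim\max(H,L_{med}),\qquad H\sim N_1N_2N_3 .$$ Write $\mathcal Q:=\|X_{N_1,N_2,N_3;H;L_1,L_2,L_3}\|_{[3;Z\times\mathbb R]}$. Then: (i) (coherent $(++)$ case) if $N_{max}\sim N_{min}$ and $L_{max}\sim H$, then $\mathcal Q\lesssim L_{min}^{1/2}\,\langle N_{max}^{-1/4}L_{med}^{1/4}\rangle_Z$; (ii) (coherent $(+-)$ case) if $N_2\sim N_3\gg N_1$ and $H\sim L_1\gtrsim L_2,L_3$, then $\mathcal Q\lesssim L_{min}^{1/2}\,\big\langle N_{max}^{-1}\min\big(H,\tfrac{N_{max}}{N_{min}}L_{med}\big)^{1/2}\big\rangle_Z$; the same holds after any permutation of the indices $1,2,3$ (i.e. if $N_j\sim N_k\gg N_i$ and $H\sim L_i\gtrsim L_j,L_k$ for $\{i,j,k\}=\{1,2,3\}$); (iii) in all other cases, $\mathcal Q\lesssim L_{min}^{1/2}\,\langle N_{max}^{-1}\min(H,L_{med})^{1/2}\rangle_Z$.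
   Context: Let $Z$ be an abelian group with invariant measure $d\xi$. For $k\ge2$ let $\Gamma_k(Z)=\{(\xi_1,\dots,\xi_k)\in Z^k:\xi_1+\dots+\xi_k=0\}$ with the measure $\int_{\Gamma_k(Z)}f=\int_{Z^{k-1}}f(\xi_1,\dots,\xi_{k-1},-\xi_1-\dots-\xi_{k-1})\,d\xi_1\cdots d\xi_{k-1}$. For a function $m:\Gamma_k(Z)\to\mathbb C$ (a "$[k;Z]$-multiplier"; functions on $Z^k$ are restricted to $\Gamma_k(Z)$), $\|m\|_{[k;Z]}$ denotes the best constant $C$ such that $|\int_{\Gamma_k(Z)}m(\xi)\prod_{j=1}^kf_j(\xi_j)|\le C\prod_{j=1}^k\|f_j\|_{L^2(Z)}$ for all test functions $f_j$ on $Z$. On $Z\times\mathbb R$ with coordinates $(\xi,\tau)$ and given $h_1,h_2,h_3:Z\to\mathbb R$, for $((\xi_j,\tau_j))_{j=1}^3\in\Gamma_3(Z\times\mathbb R)$ set $\lambda_j=\tau_j-h_j(\xi_j)$ and $h(\xi)=h_1(\xi_1)+h_2(\xi_2)+h_3(\xi_3)$. For $N_j,L_j,H>0$ define $X_{N_1,N_2,N_3;H;L_1,L_2,L_3}:=\chi_{|h(\xi)|\sim H}\prod_{j=1}^3\chi_{|\xi_j|\sim N_j}\chi_{|\lambda_j|\sim L_j}$, where $\chi_{|x|\sim A}$ is the indicator of a fixed dyadic annulus $\{c^{-1}A\le|x|\le cA\}$. $N_{max}\ge N_{med}\ge N_{min}$ denote the maximum, median, minimum of $N_1,N_2,N_3$;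 similarly $L_{max},L_{med},L_{min}$. $A\lesssim B$ means $A\le CB$ with $C$ depending only on fixed parameters (dimension, exponents, and the implicit constants in the hypotheses); $A\sim B$ means $A\lesssim B\lesssim A$; $A\ll B$ means $A\le C^{-1}B$ for a sufficiently large such $C$. Here $\langle x\rangle_Z:=|x|$ if $Z=\mathbb R$ and $\langle x\rangle_Z:=1+|x|$ if $Z=\mathbb Z$. *)

theory Defs
  imports "HOL-Analysis.Analysis"
begin

text \<open>Points of Z x R are represented as pairs (xi, tau) :: real \<times> real.
  Z = R: the measure on Z is lborel.  Z = Z: the measure on Z is the counting
  measure on the integers, viewed as the subset Ints of the reals.\<close>

definition ann :: "real \<Rightarrow> real \<Rightarrow> real \<Rightarrow> bool" where
  "ann c A x \<longleftrightarrow> A / c \<le> \<bar>x\<bar> \<and> \<bar>x\<bar> \<le> c * A"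

definition sim :: "real \<Rightarrow> real \<Rightarrow> real \<Rightarrow> bool" where
  "sim K a b \<longleftrightarrow> a \<le> K * b \<and> b \<le> K * a"

definition max3 :: "real \<Rightarrow> real \<Rightarrow> real \<Rightarrow> real" where
  "max3 a b c = max a (max b c)"
definition min3 :: "real \<Rightarrow> real \<Rightarrow> real \<Rightarrow> real" where
  "min3 a b c = min a (min b c)"
definition med3 :: "real \<Rightarrow> real \<Rightarrow> real \<Rightarrow> real" where
  "med3 a b c = a + b + c - max3 a b c - min3 a b c"

definition L2space :: "'a measure \<Rightarrow> ('a \<Rightarrow> complex) set" where
  "L2space M = {f. f \<in> borel_measurable M \<and> integrable M (\<lambda>x. (cmod (f x))\<^sup>2)}"
definition L2norm :: "'a measure \<Rightarrow> ('a \<Rightarrow> complex) \<Rightarrow> real" where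
  "L2norm M f = sqrt (\<integral>x. (cmod (f x))\<^sup>2 \<partial>M)"

text \<open>The third point of Gamma_3(Z x R): x3 = - x1 - x2.\<close>
definition neg_sum :: "real \<times> real \<Rightarrow> real \<times> real \<Rightarrow> real \<times> real" where
  "neg_sum p q = (- fst p - fst q, - snd p - snd q)"

definition ZR :: "real measure \<Rightarrow> (real \<times> real) measure" where
  "ZR M = M \<Otimes>\<^sub>M lborel"

definition tri_form :: "real measure \<Rightarrow> (real \<times> real \<Rightarrow> real \<times> real \<Rightarrow> real \<times> real \<Rightarrow> real)
    \<Rightarrow> (real \<times> real \<Rightarrow> complex) \<Rightarrow> (real \<times> real \<Rightarrow> complex) \<Rightarrow> (real \<times> real \<Rightarrow> complex) \<Rightarrow> complex" where
  "tri_form M m f1 f2 f3 =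
     (\<integral>pq. complex_of_real (m (fst pq) (snd pq) (neg_sum (fst pq) (snd pq)))
            * f1 (fst pq) * f2 (snd pq) * f3 (neg_sum (fst pq) (snd pq)) \<partial>(ZR M \<Otimes>\<^sub>M ZR M))"

definition mult_norm3 :: "real measure \<Rightarrow> (real \<times> real \<Rightarrow> real \<times> real \<Rightarrow> real \<times> real \<Rightarrow> real) \<Rightarrow> ennreal" where
  "mult_norm3 M m =
     (SUP F \<in> {(f1, f2, f3). f1 \<in> L2space (ZR M) \<and> f2 \<in> L2space (ZR M) \<and> f3 \<in> L2space (ZR M)
                  \<and> L2norm (ZR M) f1 \<le> 1 \<and> L2norm (ZR M) f2 \<le> 1 \<and> L2norm (ZR M) f3 \<le> 1}.
        ennreal (cmod (case F of (f1, f2, f3) \<Rightarrow> tri_form M m f1 f2 f3)))"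

definition Xmult :: "real \<Rightarrow> (real \<Rightarrow> real) \<Rightarrow> (real \<Rightarrow> real) \<Rightarrow> (real \<Rightarrow> real)
    \<Rightarrow> real \<Rightarrow> real \<Rightarrow> real \<Rightarrow> real \<Rightarrow> real \<Rightarrow> real \<Rightarrow> real
    \<Rightarrow> real \<times> real \<Rightarrow> real \<times> real \<Rightarrow> real \<times> real \<Rightarrow> real" where
  "Xmult c h1 h2 h3 N1 N2 N3 H L1 L2 L3 x1 x2 x3 =
     (if ann c H (h1 (fst x1) + h2 (fst x2) + h3 (fst x3))
         \<and> ann c N1 (fst x1) \<and> ann c N2 (fst x2) \<and> ann c N3 (fst x3)
         \<and> ann c L1 (snd x1 - h1 (fst x1)) \<and> ann c L2 (snd x2 - h2 (fst x2))
         \<and> ann c L3 (snd x3 - h3 (fst x3))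
      then 1 else 0)"

definition std_hyp :: "real \<Rightarrow> real \<Rightarrow> real \<Rightarrow> real \<Rightarrow> real \<Rightarrow> real \<Rightarrow> real \<Rightarrow> real \<Rightarrow> bool" where
  "std_hyp C0 N1 N2 N3 H L1 L2 L3 \<longleftrightarrow>
     H > 0 \<and> N1 > 0 \<and> N2 > 0 \<and> N3 > 0 \<and> L1 > 0 \<and> L2 > 0 \<and> L3 > 0
     \<and> sim C0 (max3 N1 N2 N3) (med3 N1 N2 N3)
     \<and> sim C0 (max3 L1 L2 L3) (max H (med3 L1 L2 L3))
     \<and> sim C0 H (N1 * N2 * N3)"

definition case_pp :: "real \<Rightarrow> real \<Rightarrow> real \<Rightarrow> real \<Rightarrow> real \<Rightarrow> real \<Rightarrow> real \<Rightarrow> real \<Rightarrow> bool" where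
  "case_pp C1 N1 N2 N3 H L1 L2 L3 \<longleftrightarrow>
     sim C1 (max3 N1 N2 N3) (min3 N1 N2 N3) \<and> sim C1 (max3 L1 L2 L3) H"

definition case_pm1 :: "real \<Rightarrow> real \<Rightarrow> real \<Rightarrow> real \<Rightarrow> real \<Rightarrow> real \<Rightarrow> real \<Rightarrow> real \<Rightarrow> real \<Rightarrow> bool" where
  "case_pm1 C1 K N1 N2 N3 H L1 L2 L3 \<longleftrightarrow>
     sim C1 N2 N3 \<and> K * N1 \<le> N2 \<and> K * N1 \<le> N3
     \<and> sim C1 H L1 \<and> L2 \<le> C1 * L1 \<and> L3 \<le> C1 * L1"

definition case_pm :: "real \<Rightarrow> real \<Rightarrow> real \<Rightarrow> real \<Rightarrow> real \<Rightarrow> real \<Rightarrow> real \<Rightarrow> real \<Rightarrow> real \<Rightarrow> bool" where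
  "case_pm C1 K N1 N2 N3 H L1 L2 L3 \<longleftrightarrow>
     case_pm1 C1 K N1 N2 N3 H L1 L2 L3
     \<or> case_pm1 C1 K N2 N1 N3 H L2 L1 L3
     \<or> case_pm1 C1 K N3 N1 N2 H L3 L1 L2"

end

theory Submission
  imports Defs
begin

definition okM :: "real measure \<Rightarrow> bool" where
  "okM M \<longleftrightarrow> M = lborel \<or> M = count_space \<int>"

lemma okM_sf: "okM M \<Longrightarrow> sigma_finite_measure M"
  unfolding okM_def
  by (auto intro: sigma_finite_measure_count_space_countable lborel.sigma_finite_measure_axioms countable_int)

lemma okM_id: "okM M \<Longrightarrow> (\<lambda>x. x) \<in> measurable M borel"
  unfolding okM_def by auto

lemma okM_into:
  assumes "okM M" "f \<in> measurable N borel" "f \<in> space N \<rightarrow> space M"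
  shows "f \<in> measurable N M"
proof (cases "M = lborel")
  case True then show ?thesis using assms by simp
next
  case False
  then have M: "M = count_space \<int>" using assms(1) unfolding okM_def by auto
  show ?thesis unfolding M
  proof (rule measurableI)
    fix x assume "x \<in> space N" then show "f x \<in> space (count_space (\<int>::real set))" using assms(3) M by auto
  next
    fix A :: "real set" assume "A \<in> sets (count_space \<int>)"
    then have "A \<subseteq> (\<int>::real set)" by auto
    then have "countable A" using countable_subset countable_int by blast
    then have "A \<in> sets borel" by (rule sets.countable[rotated]) (simp add: borel_closed)
    then show "f -` A \<inter> space N \<in> sets N" using assms(2) by (rule measurable_sets[rotated])
  qed
qed

lemma okM_sfZR: "okM M \<Longrightarrow> sigma_finite_measure (ZR M)"
  unfolding ZR_def by (intro sigma_finite_pair_measure okM_sf lborel.sigma_finite_measure_axioms)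

lemma okM_space: "okM M \<Longrightarrow> space M = UNIV \<or> space M = \<int>"
  unfolding okM_def by auto

lemma ZR_id: assumes "okM M" shows "(\<lambda>x. x) \<in> measurable (ZR M) (borel :: (real \<times> real) measure)"
proof -
  have f: "fst \<in> measurable (M \<Otimes>\<^sub>M lborel) borel"
    using measurable_comp[OF measurable_fst okM_id[OF assms]] by (simp add: o_def)
  have g: "snd \<in> measurable (M \<Otimes>\<^sub>M lborel) borel" by simp
  have "(\<lambda>x. (fst x, snd x)) \<in> measurable (ZR M) (borel \<Otimes>\<^sub>M (borel :: real measure))"
    unfolding ZR_def by (rule measurable_Pair[OF f g])
  then show ?thesis by (simp add: borel_prod)
qed

lemma P_id: assumes "okM M"
  shows "(\<lambda>x. x) \<in> measurable (ZR M \<Otimes>\<^sub>M ZR M) (borel :: ((real \<times> real) \<times> (real \<times> real)) measure)"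
proof -
  have "(\<lambda>x. (fst x, snd x)) \<in> measurable (ZR M \<Otimes>\<^sub>M ZR M) (borel \<Otimes>\<^sub>M (borel :: (real \<times> real) measure))"
    using measurable_Pair[OF measurable_comp[OF measurable_fst ZR_id[OF assms]]
        measurable_comp[OF measurable_snd ZR_id[OF assms]]] by (simp add: o_def)
  then show ?thesis by (simp add: borel_prod)
qed

lemma ZR_borel: "okM M \<Longrightarrow> g \<in> measurable borel N \<Longrightarrow> g \<in> measurable (ZR M) N"
  using measurable_comp[OF ZR_id, of M g N] by (simp add: comp_def)

lemma P_borel: "okM M \<Longrightarrow> g \<in> measurable borel N \<Longrightarrow> g \<in> measurable (ZR M \<Otimes>\<^sub>M ZR M) N"
  using measurable_comp[OF P_id, of M g N] by (simp add: comp_def)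

lemma space_ZR: "space (ZR M) = space M \<times> UNIV"
  unfolding ZR_def by (simp add: space_pair_measure)

lemma fst_borel: "(fst :: real\<times>real \<Rightarrow> real) \<in> borel_measurable borel"
  by (rule borel_measurable_continuous_onI) (auto intro!: continuous_intros)
lemma snd_borel: "(snd :: real\<times>real \<Rightarrow> real) \<in> borel_measurable borel"
  by (rule borel_measurable_continuous_onI) (auto intro!: continuous_intros)

lemma okM_intoZR:
  assumes "okM M" "f \<in> measurable N (borel :: (real \<times> real) measure)" "f \<in> space N \<rightarrow> space (ZR M)"
  shows "f \<in> measurable N (ZR M)"
  unfolding ZR_def measurable_pair_iff
proof
  show "fst \<circ> f \<in> N \<rightarrow>\<^sub>M M"
  proof (rule okM_into[OF assms(1)])
    show "fst \<circ> f \<in> borel_measurable N" by (rule measurable_comp[OF assms(2) fst_borel])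
    show "fst \<circ> f \<in> space N \<rightarrow> space M"
    proof
      fix x assume "x \<in> space N"
      then have "f x \<in> space M \<times> UNIV" using assms(3) space_ZR[of M] by auto
      then show "(fst \<circ> f) x \<in> space M" by (auto simp: mem_Times_iff)
    qed
  qed
  show "snd \<circ> f \<in> N \<rightarrow>\<^sub>M lborel"
    using measurable_comp[OF assms(2) snd_borel] by simp
qed

lemma neg_sum_space: "okM M \<Longrightarrow> p \<in> space (ZR M) \<Longrightarrow> q \<in> space (ZR M) \<Longrightarrow> neg_sum p q \<in> space (ZR M)"
  unfolding okM_def space_ZR neg_sum_def by (auto simp: mem_Times_iff)

lemma neg_sum_borel2:
  "(\<lambda>x::(real\<times>real)\<times>(real\<times>real). neg_sum (fst x) (snd x)) \<in> borel_measurable borel"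
  unfolding neg_sum_def by (rule borel_measurable_continuous_onI) (auto intro!: continuous_intros)

lemma neg_sum_borel1:
  "(\<lambda>p::real\<times>real. neg_sum p q) \<in> borel_measurable borel"
  unfolding neg_sum_def by (rule borel_measurable_continuous_onI) (auto intro!: continuous_intros)

lemma neg_sum_meas2: assumes "okM M"
  shows "(\<lambda>x. neg_sum (fst x) (snd x)) \<in> measurable (ZR M \<Otimes>\<^sub>M ZR M) (ZR M)"
proof (rule okM_intoZR[OF assms])
  show "(\<lambda>x. neg_sum (fst x) (snd x)) \<in> measurable (ZR M \<Otimes>\<^sub>M ZR M) borel"
    by (rule P_borel[OF assms neg_sum_borel2])
  show "(\<lambda>x. neg_sum (fst x) (snd x)) \<in> space (ZR M \<Otimes>\<^sub>M ZR M) \<rightarrow> space (ZR M)"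
  proof (rule Pi_I)
    fix x assume "x \<in> space (ZR M \<Otimes>\<^sub>M ZR M)"
    then show "neg_sum (fst x) (snd x) \<in> space (ZR M)"
      by (intro neg_sum_space[OF assms]) (simp_all add: space_pair_measure mem_Times_iff)
  qed
qed

lemma neg_sum_meas1: assumes "okM M" "q \<in> space (ZR M)"
  shows "(\<lambda>p. neg_sum p q) \<in> measurable (ZR M) (ZR M)"
proof (rule okM_intoZR[OF assms(1)])
  show "(\<lambda>p. neg_sum p q) \<in> measurable (ZR M) borel"
    by (rule ZR_borel[OF assms(1) neg_sum_borel1])
  show "(\<lambda>p. neg_sum p q) \<in> space (ZR M) \<rightarrow> space (ZR M)"
    by (rule Pi_I) (rule neg_sum_space[OF assms(1) _ assms(2)])
qed

lemma ZR_trans_M: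
  assumes "okM M" "a \<in> space M" "G \<in> borel_measurable M"
  shows "(\<integral>\<^sup>+x. G (- x - a) \<partial>M) = (\<integral>\<^sup>+x. G x \<partial>M)"
proof (cases "M = lborel")
  case True
  have Gb: "G \<in> borel_measurable borel" using assms(3) True by simp
  show ?thesis unfolding True
    using nn_integral_real_affine[OF Gb, of "-1" "-a"] by (simp add: algebra_simps)
next
  case False
  then have M: "M = count_space \<int>" using assms(1) unfolding okM_def by auto
  have a: "a \<in> \<int>" using assms(2) M by simp
  have bij: "bij_betw (\<lambda>x. - x - a) \<int> \<int>"
  proof (rule bij_betwI[where g="\<lambda>x. - x - a"])
    show "(\<lambda>x. - x - a) \<in> \<int> \<rightarrow> \<int>" using a by (auto intro!: Ints_diff Ints_minus)
  qed (use a in \<open>auto intro!: Ints_diff Ints_minus\<close>)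
  show ?thesis unfolding M by (rule nn_integral_bij_count_space[OF bij])
qed

lemma ZR_trans:
  assumes M: "okM M" and q: "q \<in> space (ZR M)" and phi: "\<phi> \<in> borel_measurable (ZR M)"
  shows "(\<integral>\<^sup>+p. \<phi> (neg_sum p q) \<partial>ZR M) = (\<integral>\<^sup>+p. \<phi> p \<partial>ZR M)"
proof -
  obtain a b where qab: "q = (a, b)" by (cases q)
  have a: "a \<in> space M" using q qab space_ZR[of M] by auto
  have sM: "\<And>x. x \<in> space M \<Longrightarrow> - x - a \<in> space M"
    using okM_space[OF M] a by auto
  have phi': "\<phi> \<in> borel_measurable (M \<Otimes>\<^sub>M lborel)" using phi unfolding ZR_def .
  have phi2: "(\<lambda>p. \<phi> (neg_sum p q)) \<in> borel_measurable (M \<Otimes>\<^sub>M lborel)"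
    using measurable_comp[OF neg_sum_meas1[OF M q] phi] unfolding ZR_def by (simp add: o_def)
  have inner: "(\<integral>\<^sup>+y. \<phi> (neg_sum (x, y) q) \<partial>lborel) = (\<integral>\<^sup>+y. \<phi> (- x - a, y) \<partial>lborel)"
    if x: "x \<in> space M" for x
  proof -
    have gb: "(\<lambda>y. \<phi> (- x - a, y)) \<in> borel_measurable borel"
      using measurable_Pair2[OF phi' sM[OF x]] by simp
    show ?thesis
      using nn_integral_real_affine[OF gb, of "-1" "-b"] by (simp add: neg_sum_def qab algebra_simps)
  qed
  have Gm: "(\<lambda>x. \<integral>\<^sup>+y. \<phi> (x, y) \<partial>lborel) \<in> borel_measurable M"
    using lborel.borel_measurable_nn_integral_fst[OF phi'] .
  have "(\<integral>\<^sup>+p. \<phi> (neg_sum p q) \<partial>ZR M) = (\<integral>\<^sup>+x. \<integral>\<^sup>+y. \<phi> (neg_sum (x, y) q) \<partial>lborel \<partial>M)"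
    unfolding ZR_def using lborel.nn_integral_fst[OF phi2] by simp
  also have "\<dots> = (\<integral>\<^sup>+x. (\<lambda>x. \<integral>\<^sup>+y. \<phi> (x, y) \<partial>lborel) (- x - a) \<partial>M)"
    by (rule nn_integral_cong) (simp add: inner)
  also have "\<dots> = (\<integral>\<^sup>+x. \<integral>\<^sup>+y. \<phi> (x, y) \<partial>lborel \<partial>M)"
    by (rule ZR_trans_M[OF M a Gm])
  also have "\<dots> = (\<integral>\<^sup>+p. \<phi> p \<partial>ZR M)"
    unfolding ZR_def using lborel.nn_integral_fst[OF phi'] by simp
  finally show ?thesis .
qed

lemma amgm_enn:
  fixes u v :: ennreal and t :: real
  assumes t: "t > 0"
  shows "u * v \<le> ennreal (t/2) * u\<^sup>2 + ennreal (1/(2*t)) * v\<^sup>2"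
proof (cases u; cases v)
  fix x y assume u: "u = ennreal x" "0 \<le> x" and v: "v = ennreal y" "0 \<le> y"
  have "x * y \<le> t/2 * x\<^sup>2 + 1/(2*t) * y\<^sup>2"
  proof -
    have e: "t/2 * x\<^sup>2 + 1/(2*t) * y\<^sup>2 - x * y = (t * x - y)\<^sup>2 / (2 * t)"
      using t by (simp add: field_simps power2_eq_square)
    have "0 \<le> (t * x - y)\<^sup>2 / (2 * t)" using t by simp
    then show ?thesis using e by linarith
  qed
  then show ?thesis using u v t
    by (simp add: ennreal_mult'[symmetric] ennreal_power ennreal_plus[symmetric] ennreal_leI
        del: ennreal_plus)
next
  fix x assume "u = ennreal x" "0 \<le> x" "v = top"
  then show ?thesis using t
    by (cases "x = 0") (simp_all add: ennreal_mult_top ennreal_top_mult power2_eq_square)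
next
  fix y assume "u = top" "v = ennreal y" "0 \<le> y"
  then show ?thesis using t
    by (cases "y = 0") (simp_all add: ennreal_mult_top ennreal_top_mult power2_eq_square)
next
  assume "u = top" "v = top" then show ?thesis using t by (simp add: power2_eq_square ennreal_mult_top)
qed

lemma core1:
  fixes s :: "(real \<times> real) \<times> (real \<times> real) \<Rightarrow> ennreal"
    and F1 F2 F3 :: "real \<times> real \<Rightarrow> ennreal"
  assumes M: "okM M"
    and sm: "s \<in> borel_measurable (ZR M \<Otimes>\<^sub>M ZR M)" and s1: "\<And>x. s x \<le> 1"
    and F1m: "F1 \<in> borel_measurable (ZR M)" and F2m: "F2 \<in> borel_measurable (ZR M)"
    and F3m: "F3 \<in> borel_measurable (ZR M)"
    and F1n: "(\<integral>\<^sup>+p. (F1 p)\<^sup>2 \<partial>ZR M) \<le> 1"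
    and F2n: "(\<integral>\<^sup>+p. (F2 p)\<^sup>2 \<partial>ZR M) \<le> 1"
    and F3n: "(\<integral>\<^sup>+p. (F3 p)\<^sup>2 \<partial>ZR M) \<le> 1"
    and B: "B > 0"
    and fib: "\<And>p. p \<in> space (ZR M) \<Longrightarrow> (\<integral>\<^sup>+q. s (p, q) \<partial>ZR M) \<le> ennreal B"
  shows "(\<integral>\<^sup>+x. s x * F1 (fst x) * F2 (snd x) * F3 (neg_sum (fst x) (snd x)) \<partial>(ZR M \<Otimes>\<^sub>M ZR M))
           \<le> ennreal (sqrt B)"
proof -
  interpret sf: sigma_finite_measure "ZR M" by (rule okM_sfZR[OF M])
  interpret pair_sigma_finite "ZR M" "ZR M" ..
  define t where "t = sqrt B"
  have t: "t > 0" using B by (simp add: t_def)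
  have ns: "(\<lambda>x. neg_sum (fst x) (snd x)) \<in> measurable (ZR M \<Otimes>\<^sub>M ZR M) (ZR M)"
    by (rule neg_sum_meas2[OF M])
  have m1: "(\<lambda>x. s x * (F1 (fst x))\<^sup>2) \<in> borel_measurable (ZR M \<Otimes>\<^sub>M ZR M)"
    using F1m sm by measurable
  have F3c: "(\<lambda>x. F3 (neg_sum (fst x) (snd x))) \<in> borel_measurable (ZR M \<Otimes>\<^sub>M ZR M)"
    using measurable_comp[OF ns F3m] by (simp add: o_def)
  have m2: "(\<lambda>x. (F2 (snd x))\<^sup>2 * (F3 (neg_sum (fst x) (snd x)))\<^sup>2) \<in> borel_measurable (ZR M \<Otimes>\<^sub>M ZR M)"
    using F2m F3c by measurable
  have pw: "s x * F1 (fst x) * F2 (snd x) * F3 (neg_sum (fst x) (snd x))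
      \<le> ennreal (1/(2*t)) * (s x * (F1 (fst x))\<^sup>2)
         + ennreal (t/2) * ((F2 (snd x))\<^sup>2 * (F3 (neg_sum (fst x) (snd x)))\<^sup>2)" for x
  proof -
    let ?u = "F1 (fst x)" and ?v = "F2 (snd x) * F3 (neg_sum (fst x) (snd x))"
    have "s x * ?u * ?v \<le> s x * (ennreal (1/(2*t)) * ?u\<^sup>2 + ennreal (t/2) * ?v\<^sup>2)"
    proof -
      have t': "1/t > 0" using t by simp
      have "?u * ?v \<le> ennreal (1/(2*t)) * ?u\<^sup>2 + ennreal (t/2) * ?v\<^sup>2"
        using amgm_enn[OF t', of ?u ?v] by (simp add: mult.commute)
      then show ?thesis by (simp add: mult.assoc mult_left_mono)
    qed
    also have "\<dots> = ennreal (1/(2*t)) * (s x * ?u\<^sup>2) + ennreal (t/2) * (s x * ?v\<^sup>2)"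
      by (simp add: algebra_simps)
    also have "\<dots> \<le> ennreal (1/(2*t)) * (s x * ?u\<^sup>2) + ennreal (t/2) * (1 * ?v\<^sup>2)"
      by (intro add_left_mono mult_left_mono mult_right_mono s1) auto
    finally show ?thesis by (simp add: mult.assoc power_mult_distrib)
  qed
  have I1: "(\<integral>\<^sup>+x. s x * (F1 (fst x))\<^sup>2 \<partial>(ZR M \<Otimes>\<^sub>M ZR M)) \<le> ennreal B"
  proof -
    have "(\<integral>\<^sup>+x. s x * (F1 (fst x))\<^sup>2 \<partial>(ZR M \<Otimes>\<^sub>M ZR M))
        = (\<integral>\<^sup>+p. \<integral>\<^sup>+q. s (p, q) * (F1 p)\<^sup>2 \<partial>ZR M \<partial>ZR M)"
      using sf.nn_integral_fst[OF m1] by simp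
    also have "\<dots> = (\<integral>\<^sup>+p. (F1 p)\<^sup>2 * (\<integral>\<^sup>+q. s (p, q) \<partial>ZR M) \<partial>ZR M)"
    proof (rule nn_integral_cong)
      fix p assume p: "p \<in> space (ZR M)"
      have "(\<lambda>q. s (p, q)) \<in> borel_measurable (ZR M)" using sm p by measurable
      then show "(\<integral>\<^sup>+q. s (p, q) * (F1 p)\<^sup>2 \<partial>ZR M) = (F1 p)\<^sup>2 * (\<integral>\<^sup>+q. s (p, q) \<partial>ZR M)"
        by (subst nn_integral_cmult[symmetric]) (auto simp: mult.commute)
    qed
    also have "\<dots> \<le> (\<integral>\<^sup>+p. (F1 p)\<^sup>2 * ennreal B \<partial>ZR M)"
      by (intro nn_integral_mono mult_left_mono fib) auto
    also have "\<dots> = (\<integral>\<^sup>+p. (F1 p)\<^sup>2 \<partial>ZR M) * ennreal B"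
      using F1m by (simp add: nn_integral_multc)
    also have "\<dots> \<le> 1 * ennreal B" by (intro mult_right_mono F1n) auto
    finally show ?thesis by simp
  qed
  have I2: "(\<integral>\<^sup>+x. (F2 (snd x))\<^sup>2 * (F3 (neg_sum (fst x) (snd x)))\<^sup>2 \<partial>(ZR M \<Otimes>\<^sub>M ZR M)) \<le> 1"
  proof -
    have "(\<integral>\<^sup>+x. (F2 (snd x))\<^sup>2 * (F3 (neg_sum (fst x) (snd x)))\<^sup>2 \<partial>(ZR M \<Otimes>\<^sub>M ZR M))
        = (\<integral>\<^sup>+q. \<integral>\<^sup>+p. (F2 q)\<^sup>2 * (F3 (neg_sum p q))\<^sup>2 \<partial>ZR M \<partial>ZR M)"
      using nn_integral_snd[OF m2] by simp
    also have "\<dots> = (\<integral>\<^sup>+q. (F2 q)\<^sup>2 * (\<integral>\<^sup>+p. (F3 p)\<^sup>2 \<partial>ZR M) \<partial>ZR M)"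
    proof (rule nn_integral_cong)
      fix q assume q: "q \<in> space (ZR M)"
      have F3q: "(\<lambda>p. (F3 p)\<^sup>2) \<in> borel_measurable (ZR M)" using F3m by measurable
      have "(\<lambda>p. (F3 (neg_sum p q))\<^sup>2) \<in> borel_measurable (ZR M)"
        using measurable_comp[OF neg_sum_meas1[OF M q] F3q] by (simp add: o_def)
      then have "(\<integral>\<^sup>+p. (F2 q)\<^sup>2 * (F3 (neg_sum p q))\<^sup>2 \<partial>ZR M) = (F2 q)\<^sup>2 * (\<integral>\<^sup>+p. (F3 (neg_sum p q))\<^sup>2 \<partial>ZR M)"
        by (rule nn_integral_cmult)
      also have "\<dots> = (F2 q)\<^sup>2 * (\<integral>\<^sup>+p. (F3 p)\<^sup>2 \<partial>ZR M)"
        using ZR_trans[OF M q F3q] by simp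
      finally show "(\<integral>\<^sup>+p. (F2 q)\<^sup>2 * (F3 (neg_sum p q))\<^sup>2 \<partial>ZR M) = (F2 q)\<^sup>2 * (\<integral>\<^sup>+p. (F3 p)\<^sup>2 \<partial>ZR M)" .
    qed
    also have "\<dots> \<le> (\<integral>\<^sup>+q. (F2 q)\<^sup>2 * 1 \<partial>ZR M)"
      by (intro nn_integral_mono mult_left_mono F3n) auto
    also have "\<dots> \<le> 1" using F2n by simp
    finally show ?thesis .
  qed
  have "(\<integral>\<^sup>+x. s x * F1 (fst x) * F2 (snd x) * F3 (neg_sum (fst x) (snd x)) \<partial>(ZR M \<Otimes>\<^sub>M ZR M))
      \<le> (\<integral>\<^sup>+x. ennreal (1/(2*t)) * (s x * (F1 (fst x))\<^sup>2)
         + ennreal (t/2) * ((F2 (snd x))\<^sup>2 * (F3 (neg_sum (fst x) (snd x)))\<^sup>2) \<partial>(ZR M \<Otimes>\<^sub>M ZR M))"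
    by (intro nn_integral_mono pw)
  also have "\<dots> = ennreal (1/(2*t)) * (\<integral>\<^sup>+x. s x * (F1 (fst x))\<^sup>2 \<partial>(ZR M \<Otimes>\<^sub>M ZR M))
      + ennreal (t/2) * (\<integral>\<^sup>+x. (F2 (snd x))\<^sup>2 * (F3 (neg_sum (fst x) (snd x)))\<^sup>2 \<partial>(ZR M \<Otimes>\<^sub>M ZR M))"
    using m1 m2 by (simp add: nn_integral_add nn_integral_cmult)
  also have "\<dots> \<le> ennreal (1/(2*t)) * ennreal B + ennreal (t/2) * 1"
    by (intro add_mono mult_left_mono I1 I2) auto
  also have "\<dots> = ennreal (1/(2*t) * B + t/2)"
    using t B by (simp add: ennreal_mult'[symmetric] ennreal_plus[symmetric] del: ennreal_plus)
  also have "1/(2*t) * B + t/2 = t"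
  proof -
    have "B = t * t" using B by (simp add: t_def)
    then show ?thesis using t by (simp add: field_simps)
  qed
  finally show ?thesis by (simp add: t_def)
qed

lemma neg_sum_comm: "neg_sum p q = neg_sum q p"
  unfolding neg_sum_def by (simp add: algebra_simps)

lemma neg_sum_inv: "neg_sum (neg_sum p q) q = p"
  unfolding neg_sum_def by simp

lemma core2:
  fixes s :: "(real \<times> real) \<times> (real \<times> real) \<Rightarrow> ennreal"
    and F1 F2 F3 :: "real \<times> real \<Rightarrow> ennreal"
  assumes M: "okM M"
    and sm: "s \<in> borel_measurable (ZR M \<Otimes>\<^sub>M ZR M)" and s1: "\<And>x. s x \<le> 1"
    and F1m: "F1 \<in> borel_measurable (ZR M)" and F2m: "F2 \<in> borel_measurable (ZR M)"
    and F3m: "F3 \<in> borel_measurable (ZR M)"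
    and F1n: "(\<integral>\<^sup>+p. (F1 p)\<^sup>2 \<partial>ZR M) \<le> 1"
    and F2n: "(\<integral>\<^sup>+p. (F2 p)\<^sup>2 \<partial>ZR M) \<le> 1"
    and F3n: "(\<integral>\<^sup>+p. (F3 p)\<^sup>2 \<partial>ZR M) \<le> 1"
    and B: "B > 0"
    and fib: "\<And>q. q \<in> space (ZR M) \<Longrightarrow> (\<integral>\<^sup>+p. s (p, q) \<partial>ZR M) \<le> ennreal B"
  shows "(\<integral>\<^sup>+x. s x * F1 (fst x) * F2 (snd x) * F3 (neg_sum (fst x) (snd x)) \<partial>(ZR M \<Otimes>\<^sub>M ZR M))
           \<le> ennreal (sqrt B)"
proof -
  interpret sf: sigma_finite_measure "ZR M" by (rule okM_sfZR[OF M])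
  interpret pair_sigma_finite "ZR M" "ZR M" ..
  have ns: "(\<lambda>x. neg_sum (fst x) (snd x)) \<in> measurable (ZR M \<Otimes>\<^sub>M ZR M) (ZR M)"
    by (rule neg_sum_meas2[OF M])
  have F3c: "(\<lambda>x. F3 (neg_sum (fst x) (snd x))) \<in> borel_measurable (ZR M \<Otimes>\<^sub>M ZR M)"
    using measurable_comp[OF ns F3m] by (simp add: o_def)
  have mf: "(\<lambda>x. s x * F1 (fst x) * F2 (snd x) * F3 (neg_sum (fst x) (snd x))) \<in> borel_measurable (ZR M \<Otimes>\<^sub>M ZR M)"
    using sm F1m F2m F3c by measurable
  have sm': "(\<lambda>x. s (snd x, fst x)) \<in> borel_measurable (ZR M \<Otimes>\<^sub>M ZR M)"
    using sm by measurable
  have mg: "(\<lambda>x. s (snd x, fst x) * F2 (fst x) * F1 (snd x) * F3 (neg_sum (fst x) (snd x))) \<in> borel_measurable (ZR M \<Otimes>\<^sub>M ZR M)"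
    using sm' F1m F2m F3c by measurable
  have "(\<integral>\<^sup>+x. s x * F1 (fst x) * F2 (snd x) * F3 (neg_sum (fst x) (snd x)) \<partial>(ZR M \<Otimes>\<^sub>M ZR M))
     = (\<integral>\<^sup>+q. \<integral>\<^sup>+p. s (p, q) * F1 p * F2 q * F3 (neg_sum p q) \<partial>ZR M \<partial>ZR M)"
    using nn_integral_snd[OF mf] by simp
  also have "\<dots> = (\<integral>\<^sup>+x. s (snd x, fst x) * F2 (fst x) * F1 (snd x) * F3 (neg_sum (fst x) (snd x)) \<partial>(ZR M \<Otimes>\<^sub>M ZR M))"
    using sf.nn_integral_fst[OF mg] by (simp add: neg_sum_comm mult_ac)
  also have "\<dots> \<le> ennreal (sqrt B)"
  proof (rule core1[OF M sm' _ F2m F1m F3m F2n F1n F3n B])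
    show "s (snd x, fst x) \<le> 1" for x by (rule s1)
    show "(\<integral>\<^sup>+q. s (snd (p, q), fst (p, q)) \<partial>ZR M) \<le> ennreal B" if "p \<in> space (ZR M)" for p
      using fib[OF that] by simp
  qed
  finally show ?thesis .
qed

lemma core3:
  fixes s :: "(real \<times> real) \<times> (real \<times> real) \<Rightarrow> ennreal"
    and F1 F2 F3 :: "real \<times> real \<Rightarrow> ennreal"
  assumes M: "okM M"
    and sm: "s \<in> borel_measurable (ZR M \<Otimes>\<^sub>M ZR M)" and s1: "\<And>x. s x \<le> 1"
    and F1m: "F1 \<in> borel_measurable (ZR M)" and F2m: "F2 \<in> borel_measurable (ZR M)"
    and F3m: "F3 \<in> borel_measurable (ZR M)"
    and F1n: "(\<integral>\<^sup>+p. (F1 p)\<^sup>2 \<partial>ZR M) \<le> 1"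
    and F2n: "(\<integral>\<^sup>+p. (F2 p)\<^sup>2 \<partial>ZR M) \<le> 1"
    and F3n: "(\<integral>\<^sup>+p. (F3 p)\<^sup>2 \<partial>ZR M) \<le> 1"
    and B: "B > 0"
    and fib: "\<And>r. r \<in> space (ZR M) \<Longrightarrow> (\<integral>\<^sup>+q. s (neg_sum r q, q) \<partial>ZR M) \<le> ennreal B"
  shows "(\<integral>\<^sup>+x. s x * F1 (fst x) * F2 (snd x) * F3 (neg_sum (fst x) (snd x)) \<partial>(ZR M \<Otimes>\<^sub>M ZR M))
           \<le> ennreal (sqrt B)"
proof -
  interpret sf: sigma_finite_measure "ZR M" by (rule okM_sfZR[OF M])
  interpret pair_sigma_finite "ZR M" "ZR M" ..
  have ns: "(\<lambda>x. neg_sum (fst x) (snd x)) \<in> measurable (ZR M \<Otimes>\<^sub>M ZR M) (ZR M)"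
    by (rule neg_sum_meas2[OF M])
  have F3c: "(\<lambda>x. F3 (neg_sum (fst x) (snd x))) \<in> borel_measurable (ZR M \<Otimes>\<^sub>M ZR M)"
    using measurable_comp[OF ns F3m] by (simp add: o_def)
  have F1c: "(\<lambda>x. F1 (neg_sum (fst x) (snd x))) \<in> borel_measurable (ZR M \<Otimes>\<^sub>M ZR M)"
    using measurable_comp[OF ns F1m] by (simp add: o_def)
  have mf: "(\<lambda>x. s x * F1 (fst x) * F2 (snd x) * F3 (neg_sum (fst x) (snd x))) \<in> borel_measurable (ZR M \<Otimes>\<^sub>M ZR M)"
    using sm F1m F2m F3c by measurable
  have nsp: "(\<lambda>x. (neg_sum (fst x) (snd x), snd x)) \<in> measurable (ZR M \<Otimes>\<^sub>M ZR M) (ZR M \<Otimes>\<^sub>M ZR M)"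
    using ns by measurable
  have sm': "(\<lambda>x. s (neg_sum (fst x) (snd x), snd x)) \<in> borel_measurable (ZR M \<Otimes>\<^sub>M ZR M)"
    using measurable_comp[OF nsp sm] by (simp add: o_def)
  have mg: "(\<lambda>x. s (neg_sum (fst x) (snd x), snd x) * F3 (fst x) * F2 (snd x) * F1 (neg_sum (fst x) (snd x))) \<in> borel_measurable (ZR M \<Otimes>\<^sub>M ZR M)"
    using sm' F1c F2m F3m by measurable
  have "(\<integral>\<^sup>+x. s x * F1 (fst x) * F2 (snd x) * F3 (neg_sum (fst x) (snd x)) \<partial>(ZR M \<Otimes>\<^sub>M ZR M))
     = (\<integral>\<^sup>+q. \<integral>\<^sup>+p. s (p, q) * F1 p * F2 q * F3 (neg_sum p q) \<partial>ZR M \<partial>ZR M)"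
    using nn_integral_snd[OF mf] by simp
  also have "\<dots> = (\<integral>\<^sup>+q. \<integral>\<^sup>+p. s (neg_sum p q, q) * F3 p * F2 q * F1 (neg_sum p q) \<partial>ZR M \<partial>ZR M)"
  proof (rule nn_integral_cong)
    fix q assume q: "q \<in> space (ZR M)"
    have "(\<lambda>p. s (p, q) * F1 p * F2 q * F3 (neg_sum p q)) \<in> borel_measurable (ZR M)"
      using measurable_Pair1[OF mf q] by simp
    from ZR_trans[OF M q this]
    show "(\<integral>\<^sup>+p. s (p, q) * F1 p * F2 q * F3 (neg_sum p q) \<partial>ZR M)
        = (\<integral>\<^sup>+p. s (neg_sum p q, q) * F3 p * F2 q * F1 (neg_sum p q) \<partial>ZR M)"
      by (simp add: neg_sum_inv mult_ac)
  qed
  also have "\<dots> = (\<integral>\<^sup>+x. s (neg_sum (fst x) (snd x), snd x) * F3 (fst x) * F2 (snd x) * F1 (neg_sum (fst x) (snd x)) \<partial>(ZR M \<Otimes>\<^sub>M ZR M))"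
    using nn_integral_snd[OF mg] by simp
  also have "\<dots> \<le> ennreal (sqrt B)"
  proof (rule core1[OF M sm' _ F3m F2m F1m F3n F2n F1n B])
    show "s (neg_sum (fst x) (snd x), snd x) \<le> 1" for x by (rule s1)
    show "(\<integral>\<^sup>+q. s (neg_sum (fst (p, q)) (snd (p, q)), snd (p, q)) \<partial>ZR M) \<le> ennreal B"
      if "p \<in> space (ZR M)" for p
      using fib[OF that] by simp
  qed
  finally show ?thesis .
qed

lemma L2_F:
  assumes "f \<in> L2space (ZR M)" "L2norm (ZR M) f \<le> 1"
  shows "(\<lambda>p. ennreal (cmod (f p))) \<in> borel_measurable (ZR M)"
    and "(\<integral>\<^sup>+p. (ennreal (cmod (f p)))\<^sup>2 \<partial>ZR M) \<le> 1"
proof -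
  have fm: "f \<in> borel_measurable (ZR M)" and fi: "integrable (ZR M) (\<lambda>x. (cmod (f x))\<^sup>2)"
    using assms(1) unfolding L2space_def by auto
  show "(\<lambda>p. ennreal (cmod (f p))) \<in> borel_measurable (ZR M)" using fm by measurable
  have "(\<integral>\<^sup>+p. (ennreal (cmod (f p)))\<^sup>2 \<partial>ZR M) = (\<integral>\<^sup>+p. ennreal ((cmod (f p))\<^sup>2) \<partial>ZR M)"
    by (simp add: ennreal_power)
  also have "\<dots> = ennreal (\<integral>p. (cmod (f p))\<^sup>2 \<partial>ZR M)"
    by (rule nn_integral_eq_integral[OF fi]) auto
  also have "(\<integral>p. (cmod (f p))\<^sup>2 \<partial>ZR M) \<le> 1"
  proof -
    have "sqrt (\<integral>p. (cmod (f p))\<^sup>2 \<partial>ZR M) \<le> 1" using assms(2) unfolding L2norm_def .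
    then show ?thesis by simp
  qed
  finally show "(\<integral>\<^sup>+p. (ennreal (cmod (f p)))\<^sup>2 \<partial>ZR M) \<le> 1" by (simp add: ennreal_leI)
qed

lemma norm_from_J:
  fixes m :: "real \<times> real \<Rightarrow> real \<times> real \<Rightarrow> real \<times> real \<Rightarrow> real"
  assumes M: "okM M"
    and m0: "\<And>a b d. 0 \<le> m a b d"
    and J: "\<And>F1 F2 F3. F1 \<in> borel_measurable (ZR M) \<Longrightarrow> F2 \<in> borel_measurable (ZR M) \<Longrightarrow>
       F3 \<in> borel_measurable (ZR M) \<Longrightarrow>
       (\<integral>\<^sup>+p. (F1 p)\<^sup>2 \<partial>ZR M) \<le> 1 \<Longrightarrow> (\<integral>\<^sup>+p. (F2 p)\<^sup>2 \<partial>ZR M) \<le> 1 \<Longrightarrow> (\<integral>\<^sup>+p. (F3 p)\<^sup>2 \<partial>ZR M) \<le> 1 \<Longrightarrow>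
       (\<integral>\<^sup>+x. ennreal (m (fst x) (snd x) (neg_sum (fst x) (snd x))) * F1 (fst x) * F2 (snd x)
           * F3 (neg_sum (fst x) (snd x)) \<partial>(ZR M \<Otimes>\<^sub>M ZR M)) \<le> ennreal S"
  shows "mult_norm3 M m \<le> ennreal S"
  unfolding mult_norm3_def
proof (rule SUP_least)
  fix F assume "F \<in> {(f1, f2, f3). f1 \<in> L2space (ZR M) \<and> f2 \<in> L2space (ZR M) \<and> f3 \<in> L2space (ZR M)
                  \<and> L2norm (ZR M) f1 \<le> 1 \<and> L2norm (ZR M) f2 \<le> 1 \<and> L2norm (ZR M) f3 \<le> 1}"
  then obtain f1 f2 f3 where F: "F = (f1, f2, f3)"
    and f1: "f1 \<in> L2space (ZR M)" "L2norm (ZR M) f1 \<le> 1"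
    and f2: "f2 \<in> L2space (ZR M)" "L2norm (ZR M) f2 \<le> 1"
    and f3: "f3 \<in> L2space (ZR M)" "L2norm (ZR M) f3 \<le> 1" by auto
  let ?g = "\<lambda>pq. complex_of_real (m (fst pq) (snd pq) (neg_sum (fst pq) (snd pq)))
            * f1 (fst pq) * f2 (snd pq) * f3 (neg_sum (fst pq) (snd pq))"
  have "ennreal (cmod (tri_form M m f1 f2 f3)) \<le> (\<integral>\<^sup>+x. ennreal (norm (?g x)) \<partial>(ZR M \<Otimes>\<^sub>M ZR M))"
  proof (cases "integrable (ZR M \<Otimes>\<^sub>M ZR M) ?g")
    case True
    then show ?thesis unfolding tri_form_def by (rule integral_norm_bound_ennreal)
  next
    case False
    then show ?thesis unfolding tri_form_def by (simp add: not_integrable_integral_eq)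
  qed
  also have "\<dots> = (\<integral>\<^sup>+x. ennreal (m (fst x) (snd x) (neg_sum (fst x) (snd x))) * ennreal (cmod (f1 (fst x)))
       * ennreal (cmod (f2 (snd x))) * ennreal (cmod (f3 (neg_sum (fst x) (snd x)))) \<partial>(ZR M \<Otimes>\<^sub>M ZR M))"
    by (rule nn_integral_cong) (simp add: norm_mult m0 ennreal_mult'')
  also have "\<dots> \<le> ennreal S"
    by (rule J[OF L2_F(1)[OF f1] L2_F(1)[OF f2] L2_F(1)[OF f3] L2_F(2)[OF f1] L2_F(2)[OF f2] L2_F(2)[OF f3]])
  finally show "ennreal (cmod (case F of (f1, f2, f3) \<Rightarrow> tri_form M m f1 f2 f3)) \<le> ennreal S"
    using F by simp
qed

definition iota :: "real measure \<Rightarrow> real" where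
  "iota M = (if M = lborel then 0 else 1)"

lemma card_Ints_Icc:
  fixes u v :: real assumes "u \<le> v"
  shows "finite ({u..v} \<inter> \<int>) \<and> real (card ({u..v} \<inter> \<int>)) \<le> v - u + 1"
proof -
  have eq: "{u..v} \<inter> \<int> = of_int ` {\<lceil>u\<rceil>..\<lfloor>v\<rfloor>}"
  proof
    show "{u..v} \<inter> \<int> \<subseteq> of_int ` {\<lceil>u\<rceil>..\<lfloor>v\<rfloor>}"
    proof
      fix x :: real assume x: "x \<in> {u..v} \<inter> \<int>"
      then obtain k where k: "x = of_int k" by (auto elim: Ints_cases)
      have "\<lceil>u\<rceil> \<le> k" using x k by (simp add: ceiling_le_iff)
      moreover have "k \<le> \<lfloor>v\<rfloor>" using x k by (simp add: le_floor_iff)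
      ultimately show "x \<in> of_int ` {\<lceil>u\<rceil>..\<lfloor>v\<rfloor>}" using k by auto
    qed
    show "of_int ` {\<lceil>u\<rceil>..\<lfloor>v\<rfloor>} \<subseteq> {u..v} \<inter> \<int>"
    proof
      fix x :: real assume "x \<in> of_int ` {\<lceil>u\<rceil>..\<lfloor>v\<rfloor>}"
      then obtain k where k: "x = of_int k" "\<lceil>u\<rceil> \<le> k" "k \<le> \<lfloor>v\<rfloor>" by auto
      then show "x \<in> {u..v} \<inter> \<int>" by (auto simp: ceiling_le_iff le_floor_iff)
    qed
  qed
  have inj: "inj_on (of_int :: int \<Rightarrow> real) {\<lceil>u\<rceil>..\<lfloor>v\<rfloor>}" by (auto intro: inj_onI)
  have c: "card ({u..v} \<inter> \<int>) = nat (\<lfloor>v\<rfloor> - \<lceil>u\<rceil> + 1)"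
    unfolding eq using card_image[OF inj] by simp
  have "real (nat (\<lfloor>v\<rfloor> - \<lceil>u\<rceil> + 1)) \<le> v - u + 1"
  proof (cases "\<lfloor>v\<rfloor> - \<lceil>u\<rceil> + 1 \<ge> 0")
    case True
    have "real_of_int \<lfloor>v\<rfloor> \<le> v" by simp
    moreover have "u \<le> real_of_int \<lceil>u\<rceil>" by simp
    ultimately have "real_of_int \<lfloor>v\<rfloor> - real_of_int \<lceil>u\<rceil> \<le> v - u" by linarith
    then show ?thesis using True by simp
  next
    case False then show ?thesis using assms by simp
  qed
  then show ?thesis using c eq by simp
qed

lemma Icc_meas:
  assumes M: "okM M" and uv: "u \<le> v"
  shows "(\<integral>\<^sup>+x. indicator {u..v} x \<partial>M) \<le> ennreal (v - u + iota M)"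
proof (cases "M = lborel")
  case True
  then show ?thesis using uv by (simp add: iota_def)
next
  case False
  then have Mc: "M = count_space \<int>" using M unfolding okM_def by auto
  have f: "finite ({u..v} \<inter> \<int>)" and cb: "real (card ({u..v} \<inter> \<int>)) \<le> v - u + 1"
    using card_Ints_Icc[OF uv] by auto
  have "(\<integral>\<^sup>+x. indicator {u..v} x \<partial>M) = (\<integral>\<^sup>+x. indicator ({u..v} \<inter> \<int>) x \<partial>count_space \<int>)"
    unfolding Mc by (rule nn_integral_cong) (auto simp: indicator_def)
  also have "\<dots> = emeasure (count_space \<int>) ({u..v} \<inter> \<int>)"
    by (rule nn_integral_indicator) auto
  also have "\<dots> = ennreal (real (card ({u..v} \<inter> \<int>)))"
    using f by (subst emeasure_count_space_finite) (auto simp: ennreal_of_nat_eq_real_of_nat)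
  also have "\<dots> \<le> ennreal (v - u + iota M)"
    using cb False by (simp add: iota_def ennreal_leI)
  finally show ?thesis .
qed

lemma diam_cover:
  fixes S :: "real set"
  assumes "\<And>x y. x \<in> S \<Longrightarrow> y \<in> S \<Longrightarrow> \<bar>x - y\<bar> \<le> w" "w \<ge> 0"
  shows "\<exists>u. S \<subseteq> {u..u + 2 * w}"
proof (cases "S = {}")
  case True then show ?thesis by auto
next
  case False
  then obtain x0 where "x0 \<in> S" by auto
  then have "S \<subseteq> {x0 - w..x0 - w + 2 * w}" using assms(1)[of x0] by (force simp: abs_le_iff)
  then show ?thesis by blast
qed

lemma X_borel:
  "(\<lambda>x::(real\<times>real)\<times>(real\<times>real). Xmult c (\<lambda>x. x^3) (\<lambda>x. x^3) (\<lambda>x. x^3) N1 N2 N3 H L1 L2 L3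
     (fst x) (snd x) (neg_sum (fst x) (snd x))) \<in> borel_measurable borel"
  unfolding Xmult_def ann_def neg_sum_def borel_prod[symmetric] by measurable

lemma X12: "Xmult c h h h N1 N2 N3 H L1 L2 L3 x1 x2 x3 = Xmult c h h h N2 N1 N3 H L2 L1 L3 x2 x1 x3"
  unfolding Xmult_def by (simp add: ac_simps conj_ac)

lemma X13: "Xmult c h h h N1 N2 N3 H L1 L2 L3 x1 x2 x3 = Xmult c h h h N3 N2 N1 H L3 L2 L1 x3 x2 x1"
  unfolding Xmult_def by (simp add: ac_simps conj_ac)

lemma X01: "0 \<le> Xmult c h1 h2 h3 N1 N2 N3 H L1 L2 L3 x1 x2 x3" "Xmult c h1 h2 h3 N1 N2 N3 H L1 L2 L3 x1 x2 x3 \<le> 1"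
  unfolding Xmult_def by auto

abbreviation cub :: "real \<Rightarrow> real" where "cub \<equiv> (\<lambda>x. x ^ 3)"

definition inE :: "real \<Rightarrow> real \<Rightarrow> real \<Rightarrow> real \<Rightarrow> real \<Rightarrow> real \<Rightarrow> real \<Rightarrow> real \<Rightarrow> bool" where
  "inE c Nb Nc Lb Lc a lam x \<longleftrightarrow> ann c Nb x \<and> ann c Nc (- a - x)
     \<and> \<bar>a ^ 3 + x ^ 3 + (- a - x) ^ 3 + lam\<bar> \<le> c * (Lb + Lc)"

lemma X_inE:
  assumes "Xmult c cub cub cub Na Nb Nc H La Lb Lc p (x, y) (neg_sum p (x, y)) \<noteq> 0"
  shows "ann c Na (fst p)" "inE c Nb Nc Lb Lc (fst p) (snd p - fst p ^ 3) x"
    "\<bar>y - x ^ 3\<bar> \<le> c * Lb" "\<bar>- snd p - y - (- fst p - x) ^ 3\<bar> \<le> c * Lc"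
proof -
  obtain a t where p: "p = (a, t)" by (cases p)
  have X: "ann c Na a" "ann c Nb x" "ann c Nc (- a - x)" "ann c Lb (y - x ^ 3)"
     "ann c Lc (- t - y - (- a - x) ^ 3)"
    using assms unfolding Xmult_def p neg_sum_def by (auto split: if_splits)
  then have b: "\<bar>y - x ^ 3\<bar> \<le> c * Lb" "\<bar>- t - y - (- a - x) ^ 3\<bar> \<le> c * Lc"
    unfolding ann_def by auto
  have e: "a ^ 3 + x ^ 3 + (- a - x) ^ 3 + (t - a ^ 3) = - ((y - x ^ 3) + (- t - y - (- a - x) ^ 3))"
    by (simp add: algebra_simps)
  have "\<bar>a ^ 3 + x ^ 3 + (- a - x) ^ 3 + (t - a ^ 3)\<bar> \<le> c * (Lb + Lc)"
    unfolding e using b by (simp add: distrib_left abs_le_iff)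
  then show "ann c Na (fst p)" "inE c Nb Nc Lb Lc (fst p) (snd p - fst p ^ 3) x"
    "\<bar>y - x ^ 3\<bar> \<le> c * Lb" "\<bar>- snd p - y - (- fst p - x) ^ 3\<bar> \<le> c * Lc"
    using X b unfolding inE_def p by auto
qed

lemma fiber1:
  assumes M: "okM M" and c: "c > 0" and Lb: "Lb > 0" and Lc: "Lc > 0" and w: "w \<ge> 0"
    and p: "p \<in> space (ZR M)"
    and hyp: "\<And>x y. ann c Na (fst p) \<Longrightarrow> inE c Nb Nc Lb Lc (fst p) (snd p - fst p ^ 3) x
       \<Longrightarrow> inE c Nb Nc Lb Lc (fst p) (snd p - fst p ^ 3) y
       \<Longrightarrow> (x + fst p / 2) * (y + fst p / 2) \<ge> 0 \<Longrightarrow> \<bar>x - y\<bar> \<le> w"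
  shows "(\<integral>\<^sup>+q. ennreal (Xmult c cub cub cub Na Nb Nc H La Lb Lc p q (neg_sum p q)) \<partial>ZR M)
     \<le> ennreal (2 * c * min Lb Lc * (2 * (2 * w + iota M)))"
proof -
  let ?X = "\<lambda>q. Xmult c cub cub cub Na Nb Nc H La Lb Lc p q (neg_sum p q)"
  let ?m = "2 * c * min Lb Lc"
  have m0: "?m \<ge> 0" using c Lb Lc by simp
  have io: "iota M \<ge> 0" by (simp add: iota_def)
  show ?thesis
  proof (cases "ann c Na (fst p)")
    case False
    then have "\<And>q. ?X q = 0" using X_inE(1) by (metis prod.collapse)
    then show ?thesis by simp
  next
    case True
    define E where "E = {x. inE c Nb Nc Lb Lc (fst p) (snd p - fst p ^ 3) x}"
    define E1 where "E1 = E \<inter> {x. x + fst p / 2 \<ge> 0}"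
    define E2 where "E2 = E \<inter> {x. x + fst p / 2 \<le> 0}"
    have "\<exists>u. E1 \<subseteq> {u..u + 2 * w}"
    proof (rule diam_cover[OF _ w])
      fix x y assume "x \<in> E1" "y \<in> E1"
      then show "\<bar>x - y\<bar> \<le> w" using hyp[OF True] unfolding E1_def E_def by auto
    qed
    then obtain u1 where u1: "E1 \<subseteq> {u1..u1 + 2 * w}" by blast
    have "\<exists>u. E2 \<subseteq> {u..u + 2 * w}"
    proof (rule diam_cover[OF _ w])
      fix x y assume "x \<in> E2" "y \<in> E2"
      then have "(x + fst p / 2) * (y + fst p / 2) \<ge> 0" unfolding E2_def
        by (auto intro: mult_nonpos_nonpos)
      then show "\<bar>x - y\<bar> \<le> w" using hyp[OF True] \<open>x \<in> E2\<close> \<open>y \<in> E2\<close> unfolding E2_def E_def by auto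
    qed
    then obtain u2 where u2: "E2 \<subseteq> {u2..u2 + 2 * w}" by blast
    have ind: "indicator E x \<le> (indicator {u1..u1 + 2 * w} x + indicator {u2..u2 + 2 * w} x :: ennreal)" for x
    proof (cases "x \<in> E")
      case True
      then have "x \<in> E1 \<or> x \<in> E2" unfolding E1_def E2_def by auto
      then show ?thesis using u1 u2 by (auto simp: indicator_def)
    qed simp
    have tau: "(\<integral>\<^sup>+y. ennreal (?X (x, y)) \<partial>lborel) \<le> ennreal ?m * indicator E x" for x
    proof (cases "x \<in> E")
      case False
      then have "?X (x, y) = 0" for y using X_inE(2)[of c Na Nb Nc H La Lb Lc p x y] unfolding E_def by auto
      then show ?thesis by simp
    next
      case True
      have b1: "(\<integral>\<^sup>+y. ennreal (?X (x, y)) \<partial>lborel) \<le> ennreal (2 * c * Lb)"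
      proof -
        have "(\<integral>\<^sup>+y. ennreal (?X (x, y)) \<partial>lborel) \<le> (\<integral>\<^sup>+y. indicator {x^3 - c * Lb .. x^3 + c * Lb} y \<partial>lborel)"
        proof (rule nn_integral_mono)
          fix y
          show "ennreal (?X (x, y)) \<le> indicator {x^3 - c * Lb .. x^3 + c * Lb} y"
          proof (cases "?X (x, y) = 0")
            case False
            then have "\<bar>y - x ^ 3\<bar> \<le> c * Lb" by (rule X_inE(3))
            moreover have "?X (x, y) \<le> 1" by (rule X01)
            ultimately show ?thesis by (auto simp: indicator_def abs_le_iff)
          qed simp
        qed
        also have "\<dots> = ennreal (2 * c * Lb)" using c Lb by simp
        finally show ?thesis .
      qed
      have b2: "(\<integral>\<^sup>+y. ennreal (?X (x, y)) \<partial>lborel) \<le> ennreal (2 * c * Lc)"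
      proof -
        have "(\<integral>\<^sup>+y. ennreal (?X (x, y)) \<partial>lborel)
            \<le> (\<integral>\<^sup>+y. indicator {- snd p - (- fst p - x)^3 - c * Lc .. - snd p - (- fst p - x)^3 + c * Lc} y \<partial>lborel)"
        proof (rule nn_integral_mono)
          fix y
          show "ennreal (?X (x, y)) \<le> indicator {- snd p - (- fst p - x)^3 - c * Lc .. - snd p - (- fst p - x)^3 + c * Lc} y"
          proof (cases "?X (x, y) = 0")
            case False
            then have "\<bar>- snd p - y - (- fst p - x) ^ 3\<bar> \<le> c * Lc" by (rule X_inE(4))
            moreover have "?X (x, y) \<le> 1" by (rule X01)
            ultimately show ?thesis by (auto simp: indicator_def abs_le_iff)
          qed simp
        qed
        also have "\<dots> = ennreal (2 * c * Lc)" using c Lc by simp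
        finally show ?thesis .
      qed
      have "(\<integral>\<^sup>+y. ennreal (?X (x, y)) \<partial>lborel) \<le> ennreal ?m"
        using b1 b2 by (cases "Lb \<le> Lc") (simp_all add: min_def)
      then show ?thesis using True by simp
    qed
    have Xm: "(\<lambda>q. ennreal (?X q)) \<in> borel_measurable (M \<Otimes>\<^sub>M lborel)"
    proof -
      have "(\<lambda>x. ennreal (Xmult c cub cub cub Na Nb Nc H La Lb Lc (fst x) (snd x) (neg_sum (fst x) (snd x))))
          \<in> borel_measurable (ZR M \<Otimes>\<^sub>M ZR M)"
        using P_borel[OF M X_borel] by measurable
      from measurable_Pair2[OF this p] show ?thesis unfolding ZR_def by simp
    qed
    have "(\<integral>\<^sup>+q. ennreal (?X q) \<partial>ZR M) = (\<integral>\<^sup>+x. \<integral>\<^sup>+y. ennreal (?X (x, y)) \<partial>lborel \<partial>M)"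
      unfolding ZR_def using lborel.nn_integral_fst[OF Xm] by simp
    also have "\<dots> \<le> (\<integral>\<^sup>+x. ennreal ?m * (indicator {u1..u1 + 2 * w} x + indicator {u2..u2 + 2 * w} x) \<partial>M)"
      by (intro nn_integral_mono order.trans[OF tau] mult_left_mono ind) auto
    also have "\<dots> = ennreal ?m * ((\<integral>\<^sup>+x. indicator {u1..u1 + 2 * w} x \<partial>M) + (\<integral>\<^sup>+x. indicator {u2..u2 + 2 * w} x \<partial>M))"
    proof -
      have mI: "(\<lambda>x. indicator {u..v} x :: ennreal) \<in> borel_measurable M" for u v :: real
        using okM_id[OF M] by measurable
      show ?thesis using mI by (simp add: nn_integral_cmult nn_integral_add)
    qed
    also have "\<dots> \<le> ennreal ?m * (ennreal (2 * w + iota M) + ennreal (2 * w + iota M))"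
      using Icc_meas[OF M, of u1 "u1 + 2 * w"] Icc_meas[OF M, of u2 "u2 + 2 * w"] w
      by (intro mult_left_mono add_mono) auto
    also have "\<dots> = ennreal (?m * (2 * (2 * w + iota M)))"
      using m0 w io by (simp add: ennreal_mult'[symmetric] ennreal_plus[symmetric] del: ennreal_plus)
    finally show ?thesis .
  qed
qed

definition fibhyp :: "real \<Rightarrow> real \<Rightarrow> real \<Rightarrow> real \<Rightarrow> real \<Rightarrow> real \<Rightarrow> real \<Rightarrow> bool" where
  "fibhyp c Na Nb Nc Lb Lc w \<longleftrightarrow> (\<forall>a lam x y. ann c Na a \<longrightarrow> inE c Nb Nc Lb Lc a lam x
       \<longrightarrow> inE c Nb Nc Lb Lc a lam y \<longrightarrow> (x + a / 2) * (y + a / 2) \<ge> 0 \<longrightarrow> \<bar>x - y\<bar> \<le> w)"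

lemma s_facts:
  assumes M: "okM M"
  shows "(\<lambda>x. ennreal (Xmult c cub cub cub Na Nb Nc H La Lb Lc (fst x) (snd x) (neg_sum (fst x) (snd x))))
          \<in> borel_measurable (ZR M \<Otimes>\<^sub>M ZR M)"
    "\<And>x. ennreal (Xmult c cub cub cub Na Nb Nc H La Lb Lc (fst x) (snd x) (neg_sum (fst x) (snd x))) \<le> 1"
  using P_borel[OF M X_borel] apply measurable
  using X01 by (simp add: ennreal_le_1)

lemma Qfix1:
  assumes M: "okM M" and c: "c > 0" and Lb: "Lb > 0" and Lc: "Lc > 0" and w: "w > 0"
    and hyp: "fibhyp c Na Nb Nc Lb Lc w"
  shows "mult_norm3 M (Xmult c cub cub cub Na Nb Nc H La Lb Lc)
     \<le> ennreal (sqrt (2 * c * min Lb Lc * (2 * (2 * w + iota M))))"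
proof (rule norm_from_J[OF M X01(1)])
  fix F1 F2 F3 :: "real \<times> real \<Rightarrow> ennreal"
  assume F: "F1 \<in> borel_measurable (ZR M)" "F2 \<in> borel_measurable (ZR M)" "F3 \<in> borel_measurable (ZR M)"
    "(\<integral>\<^sup>+p. (F1 p)\<^sup>2 \<partial>ZR M) \<le> 1" "(\<integral>\<^sup>+p. (F2 p)\<^sup>2 \<partial>ZR M) \<le> 1" "(\<integral>\<^sup>+p. (F3 p)\<^sup>2 \<partial>ZR M) \<le> 1"
  have B: "2 * c * min Lb Lc * (2 * (2 * w + iota M)) > 0"
    using c Lb Lc w by (simp add: iota_def)
  show "(\<integral>\<^sup>+x. ennreal (Xmult c cub cub cub Na Nb Nc H La Lb Lc (fst x) (snd x) (neg_sum (fst x) (snd x)))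
      * F1 (fst x) * F2 (snd x) * F3 (neg_sum (fst x) (snd x)) \<partial>(ZR M \<Otimes>\<^sub>M ZR M))
    \<le> ennreal (sqrt (2 * c * min Lb Lc * (2 * (2 * w + iota M))))"
  proof (rule core1[OF M s_facts[OF M] F B])
    fix p assume p: "p \<in> space (ZR M)"
    show "(\<integral>\<^sup>+q. ennreal (Xmult c cub cub cub Na Nb Nc H La Lb Lc (fst (p, q)) (snd (p, q))
        (neg_sum (fst (p, q)) (snd (p, q)))) \<partial>ZR M) \<le> ennreal (2 * c * min Lb Lc * (2 * (2 * w + iota M)))"
      using fiber1[OF M c Lb Lc less_imp_le[OF w] p, of Na Nb Nc H La] hyp
      unfolding fibhyp_def by simp
  qed
qed

lemma Qfix2:
  assumes M: "okM M" and c: "c > 0" and La: "La > 0" and Lc: "Lc > 0" and w: "w > 0"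
    and hyp: "fibhyp c Nb Na Nc La Lc w"
  shows "mult_norm3 M (Xmult c cub cub cub Na Nb Nc H La Lb Lc)
     \<le> ennreal (sqrt (2 * c * min La Lc * (2 * (2 * w + iota M))))"
proof (rule norm_from_J[OF M X01(1)])
  fix F1 F2 F3 :: "real \<times> real \<Rightarrow> ennreal"
  assume F: "F1 \<in> borel_measurable (ZR M)" "F2 \<in> borel_measurable (ZR M)" "F3 \<in> borel_measurable (ZR M)"
    "(\<integral>\<^sup>+p. (F1 p)\<^sup>2 \<partial>ZR M) \<le> 1" "(\<integral>\<^sup>+p. (F2 p)\<^sup>2 \<partial>ZR M) \<le> 1" "(\<integral>\<^sup>+p. (F3 p)\<^sup>2 \<partial>ZR M) \<le> 1"
  have B: "2 * c * min La Lc * (2 * (2 * w + iota M)) > 0"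
    using c La Lc w by (simp add: iota_def)
  show "(\<integral>\<^sup>+x. ennreal (Xmult c cub cub cub Na Nb Nc H La Lb Lc (fst x) (snd x) (neg_sum (fst x) (snd x)))
      * F1 (fst x) * F2 (snd x) * F3 (neg_sum (fst x) (snd x)) \<partial>(ZR M \<Otimes>\<^sub>M ZR M))
    \<le> ennreal (sqrt (2 * c * min La Lc * (2 * (2 * w + iota M))))"
  proof (rule core2[OF M s_facts[OF M] F B])
    fix q assume q: "q \<in> space (ZR M)"
    have "(\<integral>\<^sup>+p. ennreal (Xmult c cub cub cub Na Nb Nc H La Lb Lc (fst (p, q)) (snd (p, q))
        (neg_sum (fst (p, q)) (snd (p, q)))) \<partial>ZR M)
      = (\<integral>\<^sup>+p. ennreal (Xmult c cub cub cub Nb Na Nc H Lb La Lc q p (neg_sum q p)) \<partial>ZR M)"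
      by (simp add: X12[of c cub Na Nb Nc] neg_sum_comm)
    also have "\<dots> \<le> ennreal (2 * c * min La Lc * (2 * (2 * w + iota M)))"
      using fiber1[OF M c La Lc less_imp_le[OF w] q, of Nb Na Nc H Lb] hyp
      unfolding fibhyp_def by simp
    finally show "(\<integral>\<^sup>+p. ennreal (Xmult c cub cub cub Na Nb Nc H La Lb Lc (fst (p, q)) (snd (p, q))
        (neg_sum (fst (p, q)) (snd (p, q)))) \<partial>ZR M) \<le> ennreal (2 * c * min La Lc * (2 * (2 * w + iota M)))" .
  qed
qed

lemma Qfix3:
  assumes M: "okM M" and c: "c > 0" and La: "La > 0" and Lb: "Lb > 0" and w: "w > 0"
    and hyp: "fibhyp c Nc Nb Na Lb La w"
  shows "mult_norm3 M (Xmult c cub cub cub Na Nb Nc H La Lb Lc)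
     \<le> ennreal (sqrt (2 * c * min Lb La * (2 * (2 * w + iota M))))"
proof (rule norm_from_J[OF M X01(1)])
  fix F1 F2 F3 :: "real \<times> real \<Rightarrow> ennreal"
  assume F: "F1 \<in> borel_measurable (ZR M)" "F2 \<in> borel_measurable (ZR M)" "F3 \<in> borel_measurable (ZR M)"
    "(\<integral>\<^sup>+p. (F1 p)\<^sup>2 \<partial>ZR M) \<le> 1" "(\<integral>\<^sup>+p. (F2 p)\<^sup>2 \<partial>ZR M) \<le> 1" "(\<integral>\<^sup>+p. (F3 p)\<^sup>2 \<partial>ZR M) \<le> 1"
  have B: "2 * c * min Lb La * (2 * (2 * w + iota M)) > 0"
    using c La Lb w by (simp add: iota_def)
  show "(\<integral>\<^sup>+x. ennreal (Xmult c cub cub cub Na Nb Nc H La Lb Lc (fst x) (snd x) (neg_sum (fst x) (snd x)))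
      * F1 (fst x) * F2 (snd x) * F3 (neg_sum (fst x) (snd x)) \<partial>(ZR M \<Otimes>\<^sub>M ZR M))
    \<le> ennreal (sqrt (2 * c * min Lb La * (2 * (2 * w + iota M))))"
  proof (rule core3[OF M s_facts[OF M] F B])
    fix r assume r: "r \<in> space (ZR M)"
    have "(\<integral>\<^sup>+q. ennreal (Xmult c cub cub cub Na Nb Nc H La Lb Lc (fst (neg_sum r q, q)) (snd (neg_sum r q, q))
        (neg_sum (fst (neg_sum r q, q)) (snd (neg_sum r q, q)))) \<partial>ZR M)
      = (\<integral>\<^sup>+q. ennreal (Xmult c cub cub cub Nc Nb Na H Lc Lb La r q (neg_sum r q)) \<partial>ZR M)"
      by (simp add: X13[of c cub Na Nb Nc] neg_sum_inv)
    also have "\<dots> \<le> ennreal (2 * c * min Lb La * (2 * (2 * w + iota M)))"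
      using fiber1[OF M c Lb La less_imp_le[OF w] r, of Nc Nb Na H Lc] hyp
      unfolding fibhyp_def by simp
    finally show "(\<integral>\<^sup>+q. ennreal (Xmult c cub cub cub Na Nb Nc H La Lb Lc (fst (neg_sum r q, q)) (snd (neg_sum r q, q))
        (neg_sum (fst (neg_sum r q, q)) (snd (neg_sum r q, q)))) \<partial>ZR M) \<le> ennreal (2 * c * min Lb La * (2 * (2 * w + iota M)))" .
  qed
qed

lemma ann_bounds: "ann c A x \<Longrightarrow> A / c \<le> \<bar>x\<bar> \<and> \<bar>x\<bar> \<le> c * A"
  unfolding ann_def by auto

lemma h_diff: "(a ^ 3 + x ^ 3 + (- a - x) ^ 3) - (a ^ 3 + y ^ 3 + (- a - y) ^ 3) = - 3 * a * (x - y) * (x + y + a)"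
  for a x y :: real by (simp add: algebra_simps power3_eq_cube)

lemma geo:
  fixes a x y :: real
  assumes c: "c > 0" and x: "inE c Nb Nc Lb Lc a lam x" and y: "inE c Nb Nc Lb Lc a lam y"
    and side: "(x + a / 2) * (y + a / 2) \<ge> 0"
  shows "3 * \<bar>a\<bar> * \<bar>x - y\<bar> * \<bar>x + y + a\<bar> \<le> 2 * c * (Lb + Lc)"
    and "\<bar>x - y\<bar> \<le> \<bar>x + y + a\<bar>"
    and "\<bar>x + y + a\<bar> = \<bar>x + a / 2\<bar> + \<bar>y + a / 2\<bar>"
proof -
  have hx: "\<bar>a ^ 3 + x ^ 3 + (- a - x) ^ 3 + lam\<bar> \<le> c * (Lb + Lc)" using x unfolding inE_def by auto
  have hy: "\<bar>a ^ 3 + y ^ 3 + (- a - y) ^ 3 + lam\<bar> \<le> c * (Lb + Lc)" using y unfolding inE_def by auto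
  have "\<bar>(a ^ 3 + x ^ 3 + (- a - x) ^ 3) - (a ^ 3 + y ^ 3 + (- a - y) ^ 3)\<bar> \<le> 2 * c * (Lb + Lc)"
    using hx hy by (simp add: abs_le_iff)
  then show "3 * \<bar>a\<bar> * \<bar>x - y\<bar> * \<bar>x + y + a\<bar> \<le> 2 * c * (Lb + Lc)"
    unfolding h_diff by (simp add: abs_mult)
  have e: "x + y + a = (x + a / 2) + (y + a / 2)" by simp
  show s: "\<bar>x + y + a\<bar> = \<bar>x + a / 2\<bar> + \<bar>y + a / 2\<bar>"
    unfolding e using side
    by (cases "x + a / 2 \<ge> 0"; cases "y + a / 2 \<ge> 0") (auto simp: zero_le_mult_iff)
  have "x - y = (x + a / 2) - (y + a / 2)" by simp
  then have "\<bar>x - y\<bar> \<le> \<bar>x + a / 2\<bar> + \<bar>y + a / 2\<bar>" by linarith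
  then show "\<bar>x - y\<bar> \<le> \<bar>x + y + a\<bar>" using s by simp
qed

lemma fib_mono: "fibhyp c Na Nb Nc Lb Lc w \<Longrightarrow> w \<le> w' \<Longrightarrow> fibhyp c Na Nb Nc Lb Lc w'"
  unfolding fibhyp_def by force

lemma fib_swap: "fibhyp c Na Nb Nc Lb Lc w \<Longrightarrow> fibhyp c Na Nc Nb Lc Lb w"
  unfolding fibhyp_def
proof (intro allI impI)
  fix a lam x y
  assume H: "\<forall>a lam x y. ann c Na a \<longrightarrow> inE c Nb Nc Lb Lc a lam x \<longrightarrow> inE c Nb Nc Lb Lc a lam y
       \<longrightarrow> 0 \<le> (x + a / 2) * (y + a / 2) \<longrightarrow> \<bar>x - y\<bar> \<le> w"
    and a: "ann c Na a" and x: "inE c Nc Nb Lc Lb a lam x" and y: "inE c Nc Nb Lc Lb a lam y"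
    and s: "0 \<le> (x + a / 2) * (y + a / 2)"
  have x': "inE c Nb Nc Lb Lc a lam (- a - x)" using x unfolding inE_def by (simp add: ac_simps)
  have y': "inE c Nb Nc Lb Lc a lam (- a - y)" using y unfolding inE_def by (simp add: ac_simps)
  have s': "0 \<le> ((- a - x) + a / 2) * ((- a - y) + a / 2)"
  proof -
    have "((- a - x) + a / 2) * ((- a - y) + a / 2) = (x + a / 2) * (y + a / 2)" by (simp add: algebra_simps)
    then show ?thesis using s by simp
  qed
  have "\<bar>(- a - x) - (- a - y)\<bar> \<le> w" using H a x' y' s' by blast
  then show "\<bar>x - y\<bar> \<le> w" by (simp add: abs_minus_commute)
qed

lemma fib_T: "c > 0 \<Longrightarrow> fibhyp c Na Nb Nc Lb Lc (2 * c * Nb)"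
  unfolding fibhyp_def inE_def by (auto dest!: ann_bounds simp: abs_le_iff)

lemma fib_Q:
  assumes c: "c > 0" and Na: "Na > 0"
  shows "fibhyp c Na Nb Nc Lb Lc (sqrt (2 * c\<^sup>2 * (Lb + Lc) / (3 * Na)))"
  unfolding fibhyp_def
proof (intro allI impI)
  fix a lam x y assume a: "ann c Na a" and x: "inE c Nb Nc Lb Lc a lam x" and y: "inE c Nb Nc Lb Lc a lam y"
    and s: "0 \<le> (x + a / 2) * (y + a / 2)"
  have g1: "3 * \<bar>a\<bar> * \<bar>x - y\<bar> * \<bar>x + y + a\<bar> \<le> 2 * c * (Lb + Lc)" by (rule geo(1)[OF c x y s])
  have g2: "\<bar>x - y\<bar> \<le> \<bar>x + y + a\<bar>" by (rule geo(2)[OF c x y s])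
  have ab: "Na / c \<le> \<bar>a\<bar>" using ann_bounds[OF a] by auto
  have "3 * (Na / c) * \<bar>x - y\<bar> * \<bar>x - y\<bar> \<le> 3 * \<bar>a\<bar> * \<bar>x - y\<bar> * \<bar>x + y + a\<bar>"
    using ab g2 c Na by (intro mult_mono) auto
  then have "3 * (Na / c) * \<bar>x - y\<bar>\<^sup>2 \<le> 2 * c * (Lb + Lc)" using g1 by (simp add: power2_eq_square mult.assoc)
  then have "\<bar>x - y\<bar>\<^sup>2 \<le> 2 * c\<^sup>2 * (Lb + Lc) / (3 * Na)"
    using c Na by (simp add: field_simps power2_eq_square)
  then show "\<bar>x - y\<bar> \<le> sqrt (2 * c\<^sup>2 * (Lb + Lc) / (3 * Na))"
    using real_le_rsqrt by blast
qed

lemma fib_D: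
  assumes c: "c > 0" and Na: "Na > 0" and R: "R > 0"
    and hR: "\<And>a x. ann c Na a \<Longrightarrow> ann c Nb x \<Longrightarrow> ann c Nc (- a - x) \<Longrightarrow> R \<le> \<bar>x + a / 2\<bar>"
  shows "fibhyp c Na Nb Nc Lb Lc (c\<^sup>2 * (Lb + Lc) / (3 * Na * R))"
  unfolding fibhyp_def
proof (intro allI impI)
  fix a lam x y assume a: "ann c Na a" and x: "inE c Nb Nc Lb Lc a lam x" and y: "inE c Nb Nc Lb Lc a lam y"
    and s: "0 \<le> (x + a / 2) * (y + a / 2)"
  have g1: "3 * \<bar>a\<bar> * \<bar>x - y\<bar> * \<bar>x + y + a\<bar> \<le> 2 * c * (Lb + Lc)" by (rule geo(1)[OF c x y s])
  have g3: "\<bar>x + y + a\<bar> = \<bar>x + a / 2\<bar> + \<bar>y + a / 2\<bar>" by (rule geo(3)[OF c x y s])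
  have Rx: "R \<le> \<bar>x + a / 2\<bar>" using hR[OF a] x unfolding inE_def by auto
  have Ry: "R \<le> \<bar>y + a / 2\<bar>" using hR[OF a] y unfolding inE_def by auto
  have ab: "Na / c \<le> \<bar>a\<bar>" using ann_bounds[OF a] by auto
  have "3 * (Na / c) * \<bar>x - y\<bar> * (2 * R) \<le> 3 * \<bar>a\<bar> * \<bar>x - y\<bar> * \<bar>x + y + a\<bar>"
    using ab Rx Ry g3 c Na R by (intro mult_mono) auto
  then have "3 * (Na / c) * \<bar>x - y\<bar> * (2 * R) \<le> 2 * c * (Lb + Lc)" using g1 by linarith
  then show "\<bar>x - y\<bar> \<le> c\<^sup>2 * (Lb + Lc) / (3 * Na * R)"
    using c Na R by (simp add: field_simps power2_eq_square)
qed

lemma R1: "c > 0 \<Longrightarrow> ann c Na a \<Longrightarrow> ann c Nb x \<Longrightarrow> Nb / c - c * Na / 2 \<le> \<bar>x + a / 2\<bar>"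
  by (auto dest!: ann_bounds simp: abs_le_iff abs_if split: if_splits)

lemma R2: "c > 0 \<Longrightarrow> ann c Nb x \<Longrightarrow> ann c Nc (- a - x) \<Longrightarrow> (Nc / c - c * Nb) / 2 \<le> \<bar>x + a / 2\<bar>"
  by (auto dest!: ann_bounds simp: abs_le_iff abs_if split: if_splits)

definition QOK :: "ennreal \<Rightarrow> real \<Rightarrow> real measure \<Rightarrow> real \<Rightarrow> real \<Rightarrow> real \<Rightarrow> real \<Rightarrow> real \<Rightarrow> real \<Rightarrow> bool" where
  "QOK Q c M Na Nb Nc La Lb Lc \<longleftrightarrow> (\<forall>w>0.
     (fibhyp c Na Nb Nc Lb Lc w \<longrightarrow> Q \<le> ennreal (sqrt (2 * c * min Lb Lc * (2 * (2 * w + iota M)))))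
   \<and> (fibhyp c Nb Na Nc La Lc w \<longrightarrow> Q \<le> ennreal (sqrt (2 * c * min La Lc * (2 * (2 * w + iota M)))))
   \<and> (fibhyp c Nc Na Nb La Lb w \<longrightarrow> Q \<le> ennreal (sqrt (2 * c * min La Lb * (2 * (2 * w + iota M))))))"

lemma QOK_X:
  assumes M: "okM M" and c: "c > 0" and L: "L1 > 0" "L2 > 0" "L3 > 0"
  shows "QOK (mult_norm3 M (Xmult c cub cub cub N1 N2 N3 H L1 L2 L3)) c M N1 N2 N3 L1 L2 L3"
  unfolding QOK_def
proof (intro allI impI conjI)
  fix w :: real assume w: "w > 0"
  show "fibhyp c N1 N2 N3 L2 L3 w \<Longrightarrow> mult_norm3 M (Xmult c cub cub cub N1 N2 N3 H L1 L2 L3)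
      \<le> ennreal (sqrt (2 * c * min L2 L3 * (2 * (2 * w + iota M))))"
    by (rule Qfix1[OF M c L(2) L(3) w])
  show "fibhyp c N2 N1 N3 L1 L3 w \<Longrightarrow> mult_norm3 M (Xmult c cub cub cub N1 N2 N3 H L1 L2 L3)
      \<le> ennreal (sqrt (2 * c * min L1 L3 * (2 * (2 * w + iota M))))"
    by (rule Qfix2[OF M c L(1) L(3) w])
  assume "fibhyp c N3 N1 N2 L1 L2 w"
  then have "fibhyp c N3 N2 N1 L2 L1 w" by (rule fib_swap)
  from Qfix3[OF M c L(1) L(2) w this]
  show "mult_norm3 M (Xmult c cub cub cub N1 N2 N3 H L1 L2 L3)
      \<le> ennreal (sqrt (2 * c * min L1 L2 * (2 * (2 * w + iota M))))" by (simp add: min.commute)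
qed

lemma QOK_12: "QOK Q c M Na Nb Nc La Lb Lc \<Longrightarrow> QOK Q c M Nb Na Nc Lb La Lc"
  unfolding QOK_def
proof (intro allI impI conjI)
  fix w :: real assume H: "\<forall>w>0.
     (fibhyp c Na Nb Nc Lb Lc w \<longrightarrow> Q \<le> ennreal (sqrt (2 * c * min Lb Lc * (2 * (2 * w + iota M)))))
   \<and> (fibhyp c Nb Na Nc La Lc w \<longrightarrow> Q \<le> ennreal (sqrt (2 * c * min La Lc * (2 * (2 * w + iota M)))))
   \<and> (fibhyp c Nc Na Nb La Lb w \<longrightarrow> Q \<le> ennreal (sqrt (2 * c * min La Lb * (2 * (2 * w + iota M)))))"
    and w: "w > 0"
  show "fibhyp c Nb Na Nc La Lc w \<Longrightarrow> Q \<le> ennreal (sqrt (2 * c * min La Lc * (2 * (2 * w + iota M))))"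
    using H w by blast
  show "fibhyp c Na Nb Nc Lb Lc w \<Longrightarrow> Q \<le> ennreal (sqrt (2 * c * min Lb Lc * (2 * (2 * w + iota M))))"
    using H w by blast
  assume "fibhyp c Nc Nb Na Lb La w"
  then have "fibhyp c Nc Na Nb La Lb w" by (rule fib_swap)
  then show "Q \<le> ennreal (sqrt (2 * c * min Lb La * (2 * (2 * w + iota M))))"
    using H w by (simp add: min.commute)
qed

lemma QOK_23: "QOK Q c M Na Nb Nc La Lb Lc \<Longrightarrow> QOK Q c M Na Nc Nb La Lc Lb"
  unfolding QOK_def
proof (intro allI impI conjI)
  fix w :: real assume H: "\<forall>w>0.
     (fibhyp c Na Nb Nc Lb Lc w \<longrightarrow> Q \<le> ennreal (sqrt (2 * c * min Lb Lc * (2 * (2 * w + iota M)))))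
   \<and> (fibhyp c Nb Na Nc La Lc w \<longrightarrow> Q \<le> ennreal (sqrt (2 * c * min La Lc * (2 * (2 * w + iota M)))))
   \<and> (fibhyp c Nc Na Nb La Lb w \<longrightarrow> Q \<le> ennreal (sqrt (2 * c * min La Lb * (2 * (2 * w + iota M)))))"
    and w: "w > 0"
  show "fibhyp c Nc Na Nb La Lb w \<Longrightarrow> Q \<le> ennreal (sqrt (2 * c * min La Lb * (2 * (2 * w + iota M))))"
    using H w by blast
  show "fibhyp c Nb Na Nc La Lc w \<Longrightarrow> Q \<le> ennreal (sqrt (2 * c * min La Lc * (2 * (2 * w + iota M))))"
    using H w by blast
  assume "fibhyp c Na Nc Nb Lc Lb w"
  then have "fibhyp c Na Nb Nc Lb Lc w" by (rule fib_swap)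
  then show "Q \<le> ennreal (sqrt (2 * c * min Lc Lb * (2 * (2 * w + iota M))))"
    using H w by (simp add: min.commute)
qed

lemma half_not_Int: "(1/2 :: real) \<notin> \<int>"
proof
  assume "(1/2 :: real) \<in> \<int>"
  then obtain k where k: "(1/2 :: real) = of_int k" by (auto elim: Ints_cases)
  then have "(of_int (2 * k) :: real) = 1" by simp
  then have "2 * k = 1" by (simp only: of_int_eq_1_iff)
  then show False by presburger
qed

lemma count_ne_lborel: "count_space (\<int> :: real set) \<noteq> lborel"
proof
  assume "count_space (\<int> :: real set) = lborel"
  then have "space (count_space (\<int> :: real set)) = space lborel" by simp
  then have "(\<int> :: real set) = UNIV" by simp
  then show False using half_not_Int by auto
qed

lemma br_facts:
  assumes br: "(M = lborel \<and> br = abs) \<or> (M = count_space \<int> \<and> br = (\<lambda>x. 1 + \<bar>x\<bar>))"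
  shows "okM M" "x\<^sup>2 + iota M \<le> (br x)\<^sup>2" "br x \<ge> 0"
proof -
  show "okM M" using br unfolding okM_def by auto
  show "x\<^sup>2 + iota M \<le> (br x)\<^sup>2"
    using br count_ne_lborel
    by (auto simp: iota_def power2_eq_square algebra_simps)
  show "br x \<ge> 0" using br by auto
qed

lemma finish:
  assumes br: "(M = lborel \<and> br = abs) \<or> (M = count_space \<int> \<and> br = (\<lambda>x. 1 + \<bar>x\<bar>))"
    and c: "c > 0" and Q: "Q \<le> ennreal (sqrt (2 * c * m * (2 * (2 * w + iota M))))"
    and m0: "0 \<le> m" and m1: "m \<le> k1 * Lm" and w0: "0 \<le> w" and w1: "w \<le> k2 * X\<^sup>2"
    and k1: "k1 > 0" and k2: "k2 \<ge> 0"
  shows "Q \<le> ennreal (sqrt (4 * c * k1 * max (2 * k2) 1) * sqrt Lm * br X)"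
proof -
  have io: "0 \<le> iota M" by (simp add: iota_def)
  have Lm: "0 \<le> Lm" using m0 m1 k1 by (meson order_trans zero_le_mult_iff not_le less_imp_le)
  have bX: "X\<^sup>2 + iota M \<le> (br X)\<^sup>2" "br X \<ge> 0" using br_facts[OF br] by auto
  let ?K = "max (2 * k2) 1"
  have "2 * w + iota M \<le> 2 * k2 * X\<^sup>2 + iota M" using w1 by simp
  also have "\<dots> \<le> ?K * X\<^sup>2 + ?K * iota M"
  proof (rule add_mono)
    show "2 * k2 * X\<^sup>2 \<le> ?K * X\<^sup>2" by (intro mult_right_mono) auto
    show "iota M \<le> ?K * iota M" using io mult_right_mono[of 1 ?K "iota M"] by simp
  qed
  also have "\<dots> = ?K * (X\<^sup>2 + iota M)" by (simp add: algebra_simps)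
  also have "\<dots> \<le> ?K * (br X)\<^sup>2" using bX by (intro mult_left_mono) auto
  finally have a1: "2 * w + iota M \<le> ?K * (br X)\<^sup>2" .
  have "2 * c * m * (2 * (2 * w + iota M)) = 4 * c * m * (2 * w + iota M)" by simp
  also have "\<dots> \<le> 4 * c * (k1 * Lm) * (?K * (br X)\<^sup>2)"
    using c m0 m1 a1 w0 io by (intro mult_mono) auto
  also have "\<dots> = (4 * c * k1 * ?K) * Lm * (br X)\<^sup>2" by (simp add: algebra_simps)
  finally have a2: "2 * c * m * (2 * (2 * w + iota M)) \<le> (4 * c * k1 * ?K) * Lm * (br X)\<^sup>2" .
  have "sqrt (2 * c * m * (2 * (2 * w + iota M))) \<le> sqrt ((4 * c * k1 * ?K) * Lm * (br X)\<^sup>2)"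
    using a2 by (rule real_sqrt_le_mono)
  also have "\<dots> = sqrt (4 * c * k1 * ?K) * sqrt Lm * br X"
    using bX by (simp add: real_sqrt_mult)
  finally show ?thesis using Q by (meson ennreal_leI order_trans)
qed

lemma max3_12: "max3 b a c = max3 a b c" and max3_23: "max3 a c b = max3 a b c"
  unfolding max3_def by linarith+
lemma min3_12: "min3 b a c = min3 a b c" and min3_23: "min3 a c b = min3 a b c"
  unfolding min3_def by linarith+
lemma med3_12: "med3 b a c = med3 a b c" and med3_23: "med3 a c b = med3 a b c"
  unfolding med3_def by (simp_all add: max3_12 max3_23 min3_12 min3_23 algebra_simps)

lemma std_12: "std_hyp C0 Na Nb Nc H La Lb Lc \<Longrightarrow> std_hyp C0 Nb Na Nc H Lb La Lc"
  unfolding std_hyp_def by (simp add: max3_12 min3_12 med3_12 mult_ac)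
lemma std_23: "std_hyp C0 Na Nb Nc H La Lb Lc \<Longrightarrow> std_hyp C0 Na Nc Nb H La Lc Lb"
  unfolding std_hyp_def by (simp add: max3_23 min3_23 med3_23 mult_ac)
lemma pp_12: "case_pp C Na Nb Nc H La Lb Lc = case_pp C Nb Na Nc H Lb La Lc"
  unfolding case_pp_def by (simp add: max3_12 min3_12)
lemma pp_23: "case_pp C Na Nb Nc H La Lb Lc = case_pp C Na Nc Nb H La Lc Lb"
  unfolding case_pp_def by (simp add: max3_23 min3_23)
lemma pm1_23: "case_pm1 C K Na Nb Nc H La Lb Lc = case_pm1 C K Na Nc Nb H La Lc Lb"
  unfolding case_pm1_def sim_def by auto

lemma pw_half: "(Nm::real) > 0 \<Longrightarrow> Nm powr (-1/2) = inverse (sqrt Nm)"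
proof -
  assume "Nm > 0"
  have "Nm powr (-1/2) = Nm powr (- (1/2))" by simp
  also have "\<dots> = inverse (Nm powr (1/2))" by (rule powr_minus)
  also have "\<dots> = inverse (sqrt Nm)" using \<open>Nm > 0\<close> by (simp add: powr_half_sqrt)
  finally show ?thesis .
qed

lemma pw_m1: "(Nm::real) > 0 \<Longrightarrow> Nm powr (-1) = inverse Nm"
proof -
  assume "Nm > 0"
  have "Nm powr (-1) = inverse (Nm powr 1)" by (rule powr_minus)
  then show ?thesis using \<open>Nm > 0\<close> by simp
qed

lemma X2_i:
  assumes "Nm > 0" "Ld > 0"
  shows "(Nm powr (-1/4) * Ld powr (1/4))\<^sup>2 = sqrt (Ld / Nm)"
proof -
  have 1: "(Nm powr (-1/4))\<^sup>2 = Nm powr (-1/2)"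
    using powr_add[of Nm "-1/4" "-1/4"] by (simp add: power2_eq_square)
  have 2: "(Ld powr (1/4))\<^sup>2 = Ld powr (1/2)"
    using powr_add[of Ld "1/4" "1/4"] by (simp add: power2_eq_square)
  have 4: "Ld powr (1/2) = sqrt Ld" using assms powr_half_sqrt[of Ld] by simp
  have "(Nm powr (-1/4) * Ld powr (1/4))\<^sup>2 = inverse (sqrt Nm) * sqrt Ld"
    by (simp only: power_mult_distrib 1 2 pw_half[OF assms(1)] 4)
  then show ?thesis using assms by (simp add: real_sqrt_divide field_simps)
qed

lemma X2_ii:
  assumes "Nm > 0" "Y \<ge> 0"
  shows "(Nm powr (-1) * sqrt Y)\<^sup>2 = Y / Nm\<^sup>2"
  using assms by (simp add: pw_m1 power2_eq_square divide_inverse)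

lemma ord3:
  fixes a b c :: real
  assumes "b \<le> a" "c \<le> a"
  shows "max3 a b c = a" "med3 a b c = max b c" "min3 a b c = min b c"
  using assms unfolding max3_def med3_def min3_def by auto

lemma prod3: "max3 a b c * med3 a b c * min3 a b c = a * b * c" for a b c :: real
  unfolding max3_def med3_def min3_def
  by (cases "a \<le> b"; cases "b \<le> c"; cases "a \<le> c") (simp_all add: max_def min_def algebra_simps)

lemma med_le_max: "med3 a b c \<le> max3 a b c" and min_le_med: "min3 a b c \<le> med3 a b c"
  for a b c :: real unfolding max3_def med3_def min3_def by auto

lemma frac_le: "0 < (x::real) \<Longrightarrow> 0 < y \<Longrightarrow> a * y \<le> b * x \<Longrightarrow> a / x \<le> b / y"
  by (simp add: field_simps)

lemma QOK_A: "QOK Q c M Na Nb Nc La Lb Lc \<Longrightarrow> w > 0 \<Longrightarrow> fibhyp c Na Nb Nc Lb Lc w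
   \<Longrightarrow> Q \<le> ennreal (sqrt (2 * c * min Lb Lc * (2 * (2 * w + iota M))))"
  and QOK_B: "QOK Q c M Na Nb Nc La Lb Lc \<Longrightarrow> w > 0 \<Longrightarrow> fibhyp c Nb Na Nc La Lc w
   \<Longrightarrow> Q \<le> ennreal (sqrt (2 * c * min La Lc * (2 * (2 * w + iota M))))"
  and QOK_C: "QOK Q c M Na Nb Nc La Lb Lc \<Longrightarrow> w > 0 \<Longrightarrow> fibhyp c Nc Na Nb La Lb w
   \<Longrightarrow> Q \<le> ennreal (sqrt (2 * c * min La Lb * (2 * (2 * w + iota M))))"
  unfolding QOK_def by blast+

lemma core_i:
  fixes Q :: ennreal
  assumes br: "(M = lborel \<and> br = abs) \<or> (M = count_space \<int> \<and> br = (\<lambda>x. 1 + \<bar>x\<bar>))"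
    and c: "c > 0" and C1: "C1 \<ge> 1"
    and Q: "QOK Q c M Na Nb Nc La Lb Lc"
    and pos: "Na > 0" "Nb > 0" "Nc > 0" "La > 0" "Lb > 0" "Lc > 0"
    and pp: "max3 Na Nb Nc \<le> C1 * min3 Na Nb Nc"
    and ord: "Lb \<le> La" "Lc \<le> La"
  shows "Q \<le> ennreal (sqrt (4 * c * 1 * max (2 * (2 * c * C1)) 1) * sqrt (min3 La Lb Lc)
            * br (max3 Na Nb Nc powr (-1/4) * med3 La Lb Lc powr (1/4)))"
proof -
  define Nm where "Nm = max3 Na Nb Nc"
  define Ld where "Ld = max Lb Lc"
  have Ld_eq: "med3 La Lb Lc = Ld" and Lm_eq: "min3 La Lb Lc = min Lb Lc"
    using ord3[OF ord] unfolding Ld_def by auto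
  have Nm0: "Nm > 0" using pos unfolding Nm_def max3_def by auto
  have Ld0: "Ld > 0" using pos unfolding Ld_def by auto
  have minNa: "min3 Na Nb Nc \<le> Na" unfolding min3_def by auto
  have e2: "Nm \<le> C1 * Na" using pp minNa C1 unfolding Nm_def
    by (meson mult_left_mono order_trans zero_le_one less_le_trans not_le)
  have e1: "Lb + Lc \<le> 2 * Ld" unfolding Ld_def by linarith
  define w where "w = sqrt (2 * c\<^sup>2 * (Lb + Lc) / (3 * Na))"
  have w0: "w > 0" unfolding w_def using c pos by simp
  have fh: "fibhyp c Na Nb Nc Lb Lc w" unfolding w_def by (rule fib_Q[OF c pos(1)])
  have Qb: "Q \<le> ennreal (sqrt (2 * c * min Lb Lc * (2 * (2 * w + iota M))))"
    by (rule QOK_A[OF Q w0 fh])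
  define X where "X = Nm powr (-1/4) * Ld powr (1/4)"
  have X2: "X\<^sup>2 = sqrt (Ld / Nm)" unfolding X_def by (rule X2_i[OF Nm0 Ld0])
  have "2 * c\<^sup>2 * (Lb + Lc) * Nm \<le> 2 * c\<^sup>2 * (2 * Ld) * (C1 * Na)"
    using e1 e2 c Nm0 pos Ld0 by (intro mult_mono) auto
  also have "\<dots> \<le> ((2 * c * C1)\<^sup>2 * Ld) * (3 * Na)"
  proof -
    have "C1 \<le> 3 * C1\<^sup>2" using C1 by (simp add: power2_eq_square)
    then have "4 * (c\<^sup>2 * Ld * Na) * C1 \<le> 4 * (c\<^sup>2 * Ld * Na) * (3 * C1\<^sup>2)"
      using c Ld0 pos by (intro mult_left_mono) auto
    then show ?thesis by (simp add: power2_eq_square algebra_simps)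
  qed
  finally have "2 * c\<^sup>2 * (Lb + Lc) / (3 * Na) \<le> ((2 * c * C1)\<^sup>2 * Ld) / Nm"
    using pos Nm0 by (intro frac_le) auto
  then have "w \<le> sqrt (((2 * c * C1)\<^sup>2 * Ld) / Nm)" unfolding w_def by (rule real_sqrt_le_mono)
  also have "\<dots> = (2 * c * C1) * sqrt (Ld / Nm)"
    using c C1 by (simp add: real_sqrt_mult real_sqrt_divide)
  finally have wX: "w \<le> (2 * c * C1) * X\<^sup>2" using X2 by simp
  have "Q \<le> ennreal (sqrt (4 * c * 1 * max (2 * (2 * c * C1)) 1) * sqrt (min Lb Lc) * br X)"
    by (rule finish[OF br c Qb _ _ less_imp_le[OF w0] wX]) (use pos c C1 in auto)
  then show ?thesis unfolding Lm_eq Ld_eq X_def Nm_def .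
qed

lemma med_ge_min2: "min a b \<le> med3 a b c" for a b c :: real
  unfolding med3_def max3_def min3_def by (simp add: max_def min_def)

lemma ord3min:
  fixes a b c :: real
  assumes "a \<le> b" "a \<le> c"
  shows "max3 a b c = max b c" "min3 a b c = a"
  using assms unfolding max3_def min3_def by auto

lemma core_ii:
  fixes Q :: ennreal
  assumes br: "(M = lborel \<and> br = abs) \<or> (M = count_space \<int> \<and> br = (\<lambda>x. 1 + \<bar>x\<bar>))"
    and c: "c > 1" and C0: "C0 \<ge> 1" and C1: "C1 \<ge> 1"
    and Q: "QOK Q c M Na Nb Nc La Lb Lc"
    and pos: "Na > 0" "Nb > 0" "Nc > 0" "La > 0" "Lb > 0" "Lc > 0" "H > 0"
    and Hlow: "Na * Nb * Nc \<le> C0 * H"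
    and pm: "case_pm1 C1 (c\<^sup>2) Na Nb Nc H La Lb Lc"
  shows "Q \<le> ennreal (sqrt (4 * c * C1 * max (2 * (2 * c ^ 3 * C0 * C1\<^sup>2)) 1) * sqrt (min3 La Lb Lc)
            * br (max3 Na Nb Nc powr (-1) * sqrt (min H (max3 Na Nb Nc / min3 Na Nb Nc * med3 La Lb Lc))))"
proof -
  define K2 where "K2 = 2 * c ^ 3 * C0 * C1\<^sup>2"
  have c0: "c > 0" using c by simp
  have pmf: "Nb \<le> C1 * Nc" "Nc \<le> C1 * Nb" "c\<^sup>2 * Na \<le> Nb" "c\<^sup>2 * Na \<le> Nc"
     "Lb \<le> C1 * La" "Lc \<le> C1 * La"
    using pm unfolding case_pm1_def sim_def by auto
  have c2: "c\<^sup>2 \<ge> 1"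
  proof -
    have "1 * 1 \<le> c * c" using c by (intro mult_mono) auto
    then show ?thesis by (simp add: power2_eq_square)
  qed
  have cNa: "1 * Na \<le> c\<^sup>2 * Na" using c2 pos by (intro mult_right_mono) auto
  have NaNb: "Na \<le> Nb" using cNa pmf(3) by simp
  have NaNc: "Na \<le> Nc" using cNa pmf(4) by simp
  define Nm where "Nm = max Nb Nc"
  define Ld where "Ld = med3 La Lb Lc"
  define Lm where "Lm = min3 La Lb Lc"
  have Nm_eq: "max3 Na Nb Nc = Nm" and Nmin_eq: "min3 Na Nb Nc = Na"
    using ord3min[OF NaNb NaNc] unfolding Nm_def by auto
  have Nm0: "Nm > 0" using pos unfolding Nm_def by auto
  have Nm_sq: "Nm\<^sup>2 \<le> C1 * (Nb * Nc)"
  proof (cases "Nc \<le> Nb")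
    case True
    then have "Nm = Nb" unfolding Nm_def by auto
    then show ?thesis using pmf(1) pos by (simp add: power2_eq_square mult_right_mono mult.assoc[symmetric] mult.commute[of C1])
  next
    case False
    then have "Nm = Nc" unfolding Nm_def by auto
    then show ?thesis using pmf(2) pos
      by (simp add: power2_eq_square)
  qed
  have Nm_Nb: "Nm \<le> C1 * Nb" using pmf(2) C1 pos unfolding Nm_def
    by (auto intro: order_trans[of Nb "1 * Nb"] mult_right_mono)
  have Lb_Ld: "Lb \<le> C1 * Ld"
  proof -
    have "Lb \<le> C1 * min La Lb" using pmf(5) C1 pos by (auto simp: min_def intro: order_trans[of Lb "1 * Lb"] mult_right_mono)
    also have "\<dots> \<le> C1 * Ld" unfolding Ld_def using med_ge_min2 C1 by (intro mult_left_mono) auto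
    finally show ?thesis .
  qed
  have Lc_Ld: "Lc \<le> C1 * Ld"
  proof -
    have "Lc \<le> C1 * min La Lc" using pmf(6) C1 pos by (auto simp: min_def intro: order_trans[of Lc "1 * Lc"] mult_right_mono)
    also have "\<dots> \<le> C1 * Ld" unfolding Ld_def using med_ge_min2[of La Lc Lb] med3_23[of La Lb Lc] C1
      by (intro mult_left_mono) auto
    finally show ?thesis .
  qed
  have Ld0: "Ld > 0" using med_ge_min2[of La Lb Lc] pos unfolding Ld_def by linarith
  define Y where "Y = min H (Nm / Na * Ld)"
  have Y0: "Y \<ge> 0" unfolding Y_def using pos Nm0 Ld0 by simp
  define X where "X = Nm powr (-1) * sqrt Y"
  have X2: "X\<^sup>2 = Y / Nm\<^sup>2" unfolding X_def by (rule X2_ii[OF Nm0 Y0])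
  have K2ge: "2 * c * C0 * C1 \<le> K2"
  proof -
    have one: "1 * 1 \<le> c\<^sup>2 * C1" using c2 C1 by (intro mult_mono) auto
    have "2 * c * C0 * C1 * 1 \<le> 2 * c * C0 * C1 * (c\<^sup>2 * C1)"
      using one c C0 C1 by (intro mult_left_mono) auto
    then show ?thesis unfolding K2_def by (simp add: power2_eq_square power3_eq_cube algebra_simps)
  qed
  have Lm_le: "min Lb Lc \<le> C1 * Lm" "min La Lc \<le> C1 * Lm \<or> Lb < Lc" "min La Lb \<le> C1 * Lm \<or> Lc \<le> Lb"
  proof -
    show "min Lb Lc \<le> C1 * Lm"
    proof (cases "La \<le> min Lb Lc")
      case True
      then have "Lm = La" unfolding Lm_def min3_def by auto
      then show ?thesis using pmf(5) by auto
    next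
      case False
      then have "Lm = min Lb Lc" unfolding Lm_def min3_def by auto
      then show ?thesis using C1 pos by (auto intro: order_trans[of _ "1 * min Lb Lc"] mult_right_mono)
    qed
    show "min La Lc \<le> C1 * Lm \<or> Lb < Lc"
    proof (cases "Lc \<le> Lb")
      case True
      then have "Lm = min La Lc" unfolding Lm_def min3_def by auto
      then show ?thesis using C1 pos by (auto intro: order_trans[of _ "1 * min La Lc"] mult_right_mono)
    qed simp
    show "min La Lb \<le> C1 * Lm \<or> Lc \<le> Lb"
    proof (cases "Lb < Lc")
      case True
      then have "Lm = min La Lb" unfolding Lm_def min3_def by auto
      then show ?thesis using C1 pos by (auto intro: order_trans[of _ "1 * min La Lb"] mult_right_mono)
    qed simp
  qed
  have main: "Q \<le> ennreal (sqrt (4 * c * C1 * max (2 * K2) 1) * sqrt Lm * br X)"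
  proof (cases "H \<le> Nm / Na * Ld")
    case True
    then have Y: "Y = H" unfolding Y_def by simp
    define w where "w = 2 * c * Na"
    have w0: "w > 0" unfolding w_def using c0 pos by simp
    have "w * Nm\<^sup>2 \<le> 2 * c * Na * (C1 * (Nb * Nc))" unfolding w_def
      using Nm_sq c0 pos by (intro mult_left_mono) auto
    also have "\<dots> = 2 * c * C1 * (Na * Nb * Nc)" by (simp add: algebra_simps)
    also have "\<dots> \<le> 2 * c * C1 * (C0 * H)" using Hlow c0 C1 by (intro mult_left_mono) auto
    also have "\<dots> = (2 * c * C0 * C1) * H" by (simp add: algebra_simps)
    also have "\<dots> \<le> K2 * H" using K2ge pos by (intro mult_right_mono) auto
    finally have "w * Nm\<^sup>2 \<le> K2 * H" .
    then have wX: "w \<le> K2 * X\<^sup>2" unfolding X2 Y using Nm0 by (simp add: field_simps)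
    have K20: "K2 \<ge> 0" unfolding K2_def using c0 C0 C1 by simp
    show ?thesis
    proof (cases "Lc \<le> Lb")
      case True
      have fh: "fibhyp c Nb Na Nc La Lc w" unfolding w_def by (rule fib_T[OF c0])
      have Qb: "Q \<le> ennreal (sqrt (2 * c * min La Lc * (2 * (2 * w + iota M))))" by (rule QOK_B[OF Q w0 fh])
      show ?thesis
        by (rule finish[OF br c0 Qb _ _ less_imp_le[OF w0] wX _ K20]) (use Lm_le(2) True pos C1 in auto)
    next
      case False
      have fh: "fibhyp c Nc Na Nb La Lb w" unfolding w_def by (rule fib_T[OF c0])
      have Qb: "Q \<le> ennreal (sqrt (2 * c * min La Lb * (2 * (2 * w + iota M))))" by (rule QOK_C[OF Q w0 fh])
      show ?thesis
        by (rule finish[OF br c0 Qb _ _ less_imp_le[OF w0] wX _ K20]) (use Lm_le(3) False pos C1 in auto)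
    qed
  next
    case False
    then have Y: "Y = Nm / Na * Ld" unfolding Y_def by simp
    define R where "R = Nb / (2 * c)"
    have R0: "R > 0" unfolding R_def using pos c0 by simp
    have hR: "R \<le> \<bar>x + a / 2\<bar>" if "ann c Na a" "ann c Nb x" "ann c Nc (- a - x)" for a x
    proof -
      have "Nb / c - c * Na / 2 \<le> \<bar>x + a / 2\<bar>" by (rule R1[OF c0 that(1) that(2)])
      moreover have "c * Na \<le> Nb / c"
      proof -
        have "c * (c * Na) \<le> Nb" using pmf(3) by (simp add: power2_eq_square mult.assoc)
        then show ?thesis using c0 by (simp add: field_simps)
      qed
      ultimately show ?thesis unfolding R_def using c0 by (simp add: field_simps)
    qed
    define w where "w = c\<^sup>2 * (Lb + Lc) / (3 * Na * R)"
    have w0: "w > 0" unfolding w_def using c0 pos R0 by simp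
    have fh: "fibhyp c Na Nb Nc Lb Lc w" unfolding w_def by (rule fib_D[OF c0 pos(1) R0 hR])
    have Qb: "Q \<le> ennreal (sqrt (2 * c * min Lb Lc * (2 * (2 * w + iota M))))" by (rule QOK_A[OF Q w0 fh])
    have wX: "w \<le> K2 * X\<^sup>2"
    proof -
      have w_eq: "w = 2 * c ^ 3 * (Lb + Lc) / (3 * Na * Nb)"
        unfolding w_def R_def using c0 pos by (simp add: field_simps power2_eq_square power3_eq_cube)
      have X2': "X\<^sup>2 = Ld / (Na * Nm)" unfolding X2 Y using Nm0 pos by (simp add: field_simps power2_eq_square)
      have "2 * c ^ 3 * (Lb + Lc) * (Na * Nm) \<le> 2 * c ^ 3 * (2 * C1 * Ld) * (Na * (C1 * Nb))"
        using Lb_Ld Lc_Ld Nm_Nb c0 pos Nm0 by (intro mult_mono mult_left_mono) auto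
      also have "\<dots> = (2 * c\<^sup>2 * C1\<^sup>2 * Ld) * (2 * c * Na * Nb)"
        by (simp add: power2_eq_square power3_eq_cube algebra_simps)
      also have "\<dots> \<le> (2 * c\<^sup>2 * C1\<^sup>2 * Ld) * (3 * C0 * c * Na * Nb)"
        using C0 c0 pos Ld0 by (intro mult_left_mono mult_right_mono) auto
      also have "\<dots> = (K2 * Ld) * (3 * Na * Nb)"
        unfolding K2_def by (simp add: power2_eq_square power3_eq_cube algebra_simps)
      finally have "2 * c ^ 3 * (Lb + Lc) / (3 * Na * Nb) \<le> K2 * Ld / (Na * Nm)"
        using pos Nm0 by (intro frac_le) auto
      then show ?thesis unfolding w_eq X2' by simp
    qed
    have K20: "K2 \<ge> 0" unfolding K2_def using c0 C0 C1 by simp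
    show ?thesis
      by (rule finish[OF br c0 Qb _ _ less_imp_le[OF w0] wX _ K20]) (use Lm_le(1) pos C1 in auto)
  qed
  then show ?thesis unfolding Nm_eq Nmin_eq Lm_def Ld_def K2_def X_def Y_def
    by (simp add: Nm_eq Nmin_eq)
qed

lemma core_iii:
  fixes Q :: ennreal
  assumes br: "(M = lborel \<and> br = abs) \<or> (M = count_space \<int> \<and> br = (\<lambda>x. 1 + \<bar>x\<bar>))"
    and c: "c > 1" and C0: "C0 \<ge> 1"
    and Q: "QOK Q c M Na Nb Nc La Lb Lc"
    and pos: "Na > 0" "Nb > 0" "Nc > 0" "La > 0" "Lb > 0" "Lc > 0" "H > 0"
    and sN: "max3 Na Nb Nc \<le> C0 * med3 Na Nb Nc"
    and sL: "max3 La Lb Lc \<le> C0 * max H (med3 La Lb Lc)" "max H (med3 La Lb Lc) \<le> C0 * max3 La Lb Lc"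
    and Hlow: "Na * Nb * Nc \<le> C0 * H"
    and npp: "\<not> case_pp (2 * c\<^sup>2 * C0) Na Nb Nc H La Lb Lc"
    and npm: "\<not> case_pm1 (2 * c\<^sup>2 * C0) 1 Na Nb Nc H La Lb Lc"
    and ord: "Lb \<le> La" "Lc \<le> La" "Nb \<le> Nc"
  shows "Q \<le> ennreal (sqrt (4 * c * 1 * max (2 * (8 * c ^ 3 * C0 ^ 3)) 1) * sqrt (min3 La Lb Lc)
            * br (max3 Na Nb Nc powr (-1) * sqrt (min H (med3 La Lb Lc))))"
proof -
  define A where "A = 2 * c\<^sup>2 * C0"
  define K3 where "K3 = 8 * c ^ 3 * C0 ^ 3"
  have c0: "c > 0" using c by simp
  have c2: "c\<^sup>2 \<ge> 1"
  proof -
    have "1 * 1 \<le> c * c" using c by (intro mult_mono) auto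
    then show ?thesis by (simp add: power2_eq_square)
  qed
  have AC0: "C0 \<le> A" unfolding A_def using c2 C0 by (simp add: mult_le_cancel_right1)
  have A1: "A \<ge> 1" using AC0 C0 by simp
  define Nm where "Nm = max3 Na Nb Nc"
  define Nd where "Nd = med3 Na Nb Nc"
  define Nn where "Nn = min3 Na Nb Nc"
  define Ld where "Ld = max Lb Lc"
  have Lmax: "max3 La Lb Lc = La" and Ld_eq: "med3 La Lb Lc = Ld" and Lm_eq: "min3 La Lb Lc = min Lb Lc"
    using ord3[OF ord(1,2)] unfolding Ld_def by auto
  have Nm0: "Nm > 0" using pos unfolding Nm_def max3_def by auto
  have Nn0: "Nn > 0" using pos unfolding Nn_def min3_def by auto
  have Nnm: "Nn \<le> Nm" using min_le_med med_le_max unfolding Nn_def Nm_def by (metis order_trans)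
  have HLa: "H \<le> C0 * La" using sL(2) Lmax by simp
  have KF: "Nn * Nm\<^sup>2 \<le> C0\<^sup>2 * H"
  proof -
    have "Nn * Nm\<^sup>2 = Nm * Nm * Nn" by (simp add: power2_eq_square)
    also have "\<dots> \<le> Nm * (C0 * Nd) * Nn" using sN Nm0 Nn0 unfolding Nm_def Nd_def
      by (intro mult_right_mono mult_left_mono) auto
    also have "\<dots> = C0 * (Nm * Nd * Nn)" by (simp add: algebra_simps)
    also have "\<dots> = C0 * (Na * Nb * Nc)" unfolding Nm_def Nd_def Nn_def prod3 ..
    also have "\<dots> \<le> C0 * (C0 * H)" using Hlow C0 by (intro mult_left_mono) auto
    finally show ?thesis by (simp add: power2_eq_square)
  qed
  have big: "min H Ld = H" if "La > A * H"
  proof -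
    have "La \<le> C0 * max H Ld" using sL(1) Lmax Ld_eq by simp
    moreover have "\<not> Ld < H"
    proof
      assume "Ld < H"
      then have "La \<le> C0 * H" using \<open>La \<le> C0 * max H Ld\<close> by simp
      also have "\<dots> \<le> A * H" using AC0 pos by (intro mult_right_mono) auto
      finally show False using that by simp
    qed
    ultimately show ?thesis by simp
  qed
  define Y where "Y = min H Ld"
  have Ld0: "Ld > 0" using pos unfolding Ld_def by auto
  have Y0: "Y \<ge> 0" unfolding Y_def using pos Ld0 by simp
  define X where "X = Nm powr (-1) * sqrt Y"
  have X2: "X\<^sup>2 = Y / Nm\<^sup>2" unfolding X_def by (rule X2_ii[OF Nm0 Y0])
  have K30: "K3 \<ge> 0" unfolding K3_def using c0 C0 by simp
  have c3: "c ^ 3 \<ge> c"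
  proof -
    have "c * 1 \<le> c * c\<^sup>2" using c2 c0 by (intro mult_left_mono) auto
    then show ?thesis by (simp add: power2_eq_square power3_eq_cube)
  qed
  have C03: "C0 ^ 3 \<ge> C0\<^sup>2"
  proof -
    have "C0\<^sup>2 * 1 \<le> C0\<^sup>2 * C0" using C0 by (intro mult_left_mono) auto
    then show ?thesis by (simp add: power2_eq_square power3_eq_cube)
  qed
  have small: "w \<le> K3 * X\<^sup>2" if "Y = H" "w * Nm\<^sup>2 \<le> 2 * c * A * C0\<^sup>2 * H" for w
  proof -
    have "2 * c * A * C0\<^sup>2 = 4 * (c * c\<^sup>2) * (C0 * C0\<^sup>2)" unfolding A_def by (simp add: algebra_simps)
    also have "\<dots> \<le> K3" unfolding K3_def using c2 c0 C0
      by (simp add: power2_eq_square power3_eq_cube)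
    finally have "2 * c * A * C0\<^sup>2 \<le> K3" .
    then have "2 * c * A * C0\<^sup>2 * H \<le> K3 * H" using pos by (intro mult_right_mono) auto
    then have "w * Nm\<^sup>2 \<le> K3 * H" using that(2) by simp
    then show ?thesis unfolding X2 that(1) using Nm0 by (simp add: field_simps)
  qed
  have small2: "w \<le> K3 * X\<^sup>2" if "Y = H" "w * Nm\<^sup>2 \<le> 2 * c * C0\<^sup>2 * H" for w
  proof (rule small[OF that(1)])
    have "2 * c * C0\<^sup>2 * H * 1 \<le> 2 * c * C0\<^sup>2 * H * A" using A1 c0 pos by (intro mult_left_mono) auto
    then show "w * Nm\<^sup>2 \<le> 2 * c * A * C0\<^sup>2 * H" using that(2) by (simp add: algebra_simps)
  qed
  have main: "Q \<le> ennreal (sqrt (4 * c * 1 * max (2 * K3) 1) * sqrt (min Lb Lc) * br X)"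
  proof (cases "Nm \<le> A * Nn")
    case True
    have "1 * Nm \<le> A * Nm" using A1 Nm0 by (intro mult_right_mono) auto
    then have "sim A Nm Nn" unfolding sim_def using True Nnm by auto
    then have "\<not> sim A La H" using npp unfolding case_pp_def Nm_def Nn_def Lmax A_def by auto
    moreover have "H \<le> A * La"
    proof -
      have "C0 * La \<le> A * La" using AC0 pos by (intro mult_right_mono) auto
      then show ?thesis using HLa by simp
    qed
    ultimately have "La > A * H" unfolding sim_def by auto
    then have Y: "Y = H" unfolding Y_def by (rule big)
    define w where "w = 2 * c * Nb"
    have w0: "w > 0" unfolding w_def using c0 pos by simp
    have fh: "fibhyp c Na Nb Nc Lb Lc w" unfolding w_def by (rule fib_T[OF c0])
    have Qb: "Q \<le> ennreal (sqrt (2 * c * min Lb Lc * (2 * (2 * w + iota M))))" by (rule QOK_A[OF Q w0 fh])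
    have "Nb \<le> Nm" unfolding Nm_def max3_def by auto
    then have "Nb \<le> A * Nn" using True by simp
    then have "w * Nm\<^sup>2 \<le> 2 * c * (A * Nn) * Nm\<^sup>2" unfolding w_def using c0
      by (intro mult_right_mono mult_left_mono) auto
    also have "\<dots> = 2 * c * A * (Nn * Nm\<^sup>2)" by (simp add: algebra_simps)
    also have "\<dots> \<le> 2 * c * A * (C0\<^sup>2 * H)" using KF c0 A1 by (intro mult_left_mono) auto
    finally have "w * Nm\<^sup>2 \<le> 2 * c * A * C0\<^sup>2 * H" by (simp add: algebra_simps)
    then have wX: "w \<le> K3 * X\<^sup>2" by (rule small[OF Y])
    show ?thesis
      by (rule finish[OF br c0 Qb _ _ less_imp_le[OF w0] wX _ K30]) (use pos in auto)
  next
    case False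
    then have NmA: "A * Nn < Nm" by simp
    show ?thesis
    proof (cases "Nb \<le> Na")
      case True
      have Nn_eq: "Nn = Nb" unfolding Nn_def min3_def using True ord(3) by auto
      have Nd_eq: "Nd = min Na Nc" unfolding Nd_def med3_def max3_def min3_def using True ord(3)
        by (auto simp: max_def min_def)
      have sN': "Nm \<le> C0 * Nd" using sN unfolding Nm_def Nd_def .
      have "C0 * Nd \<le> C0 * Nc" "C0 * Nd \<le> C0 * Na" using Nd_eq C0 by (auto intro!: mult_left_mono)
      then have NcNd: "Nm \<le> C0 * Nc" "Nm \<le> C0 * Na" using sN' by auto
      show ?thesis
      proof (cases "H \<le> Ld")
        case True
        then have Y: "Y = H" unfolding Y_def by simp
        define w where "w = 2 * c * Nb"
        have w0: "w > 0" unfolding w_def using c0 pos by simp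
        have fh: "fibhyp c Na Nb Nc Lb Lc w" unfolding w_def by (rule fib_T[OF c0])
        have Qb: "Q \<le> ennreal (sqrt (2 * c * min Lb Lc * (2 * (2 * w + iota M))))" by (rule QOK_A[OF Q w0 fh])
        have "w * Nm\<^sup>2 = 2 * c * (Nn * Nm\<^sup>2)" unfolding w_def Nn_eq by simp
        also have "\<dots> \<le> 2 * c * (C0\<^sup>2 * H)" using KF c0 by (intro mult_left_mono) auto
        finally have "w * Nm\<^sup>2 \<le> 2 * c * C0\<^sup>2 * H" by (simp add: algebra_simps)
        then have wX: "w \<le> K3 * X\<^sup>2" by (rule small2[OF Y])
        show ?thesis
          by (rule finish[OF br c0 Qb _ _ less_imp_le[OF w0] wX _ K30]) (use pos in auto)
      next
        case False
        then have Y: "Y = Ld" unfolding Y_def by simp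
        define R where "R = Nm / (4 * c * C0)"
        have R0: "R > 0" unfolding R_def using Nm0 c0 C0 by simp
        have hR: "R \<le> \<bar>x + a / 2\<bar>" if "ann c Na a" "ann c Nb x" "ann c Nc (- a - x)" for a x
        proof -
          have r2: "(Nc / c - c * Nb) / 2 \<le> \<bar>x + a / 2\<bar>" by (rule R2[OF c0 that(2) that(3)])
          have t1: "Nm / (c * C0) \<le> Nc / c" using NcNd(1) c0 C0 by (simp add: field_simps)
          have t2: "c * Nb \<le> Nm / (2 * c * C0)"
          proof -
            have "A * Nb \<le> Nm" using NmA Nn_eq by simp
            then show ?thesis unfolding A_def using c0 C0 by (simp add: field_simps power2_eq_square)
          qed
          have "R = (Nm / (c * C0) - Nm / (2 * c * C0)) / 2" unfolding R_def using c0 C0 by (simp add: field_simps)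
          also have "\<dots> \<le> (Nc / c - c * Nb) / 2" using diff_mono[OF t1 t2] by (simp add: divide_right_mono)
          finally show ?thesis using r2 by simp
        qed
        define w where "w = c\<^sup>2 * (Lb + Lc) / (3 * Na * R)"
        have w0: "w > 0" unfolding w_def using c0 pos R0 by simp
        have fh: "fibhyp c Na Nb Nc Lb Lc w" unfolding w_def by (rule fib_D[OF c0 pos(1) R0 hR])
        have Qb: "Q \<le> ennreal (sqrt (2 * c * min Lb Lc * (2 * (2 * w + iota M))))" by (rule QOK_A[OF Q w0 fh])
        have wX: "w \<le> K3 * X\<^sup>2"
        proof -
          have e1: "Lb + Lc \<le> 2 * Ld" unfolding Ld_def by linarith
          have "c\<^sup>2 * (Lb + Lc) * Nm\<^sup>2 \<le> c\<^sup>2 * (2 * Ld) * (C0 * Na * Nm)"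
            using e1 NcNd(2) Nm0 c0 Ld0 pos
            by (intro mult_mono) (auto simp: power2_eq_square mult.assoc mult_right_mono)
          also have "\<dots> = (8 * c ^ 3 * C0\<^sup>2 * Ld) * (3 * Na * R) * (1/3)"
            unfolding R_def using c0 C0 by (simp add: field_simps power2_eq_square power3_eq_cube)
          also have "\<dots> \<le> (K3 * Ld) * (3 * Na * R)"
          proof -
            have "C0 ^ 3 \<ge> 0" using C0 by simp
            then have "C0\<^sup>2 * (1/3) \<le> C0 ^ 3" using C03 by linarith
            then have "(8 * c ^ 3) * (C0\<^sup>2 * (1/3)) \<le> (8 * c ^ 3) * C0 ^ 3" using c0 by (intro mult_left_mono) auto
            then have "8 * c ^ 3 * C0\<^sup>2 * (1/3) \<le> K3" unfolding K3_def by (simp add: mult.assoc)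
            then have "(8 * c ^ 3 * C0\<^sup>2 * (1/3)) * (Ld * (3 * Na * R)) \<le> K3 * (Ld * (3 * Na * R))"
              using Ld0 pos R0 by (intro mult_right_mono) auto
            then show ?thesis by (simp add: algebra_simps)
          qed
          finally have "c\<^sup>2 * (Lb + Lc) / (3 * Na * R) \<le> K3 * Ld / Nm\<^sup>2"
            using pos R0 Nm0 by (intro frac_le) auto
          then show ?thesis unfolding w_def X2 Y by simp
        qed
        show ?thesis
          by (rule finish[OF br c0 Qb _ _ less_imp_le[OF w0] wX _ K30]) (use pos in auto)
      qed
    next
      case False
      then have NaNb: "Na < Nb" by simp
      have Nn_eq: "Nn = Na" unfolding Nn_def min3_def using NaNb ord(3) by auto
      have Nd_eq: "Nd = Nb" unfolding Nd_def med3_def max3_def min3_def using NaNb ord(3)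
        by (auto simp: max_def min_def)
      have Nm_eq: "Nm = Nc" unfolding Nm_def max3_def using NaNb ord(3) by auto
      have "case_pm1 A 1 Na Nb Nc H La Lb Lc \<longleftrightarrow> sim A H La"
      proof -
        have "1 * Nc \<le> A * Nc" using A1 pos by (intro mult_right_mono) auto
        then have "Nb \<le> A * Nc" using ord(3) by simp
        moreover have "Nc \<le> A * Nb"
        proof -
          have "Nc \<le> C0 * Nb" using sN unfolding Nm_def[symmetric] Nd_def[symmetric] Nm_eq Nd_eq .
          also have "\<dots> \<le> A * Nb" using AC0 pos by (intro mult_right_mono) auto
          finally show ?thesis .
        qed
        moreover have "1 * La \<le> A * La" using A1 pos by (intro mult_right_mono) auto
        then have "Lb \<le> A * La" "Lc \<le> A * La" using ord by auto
        ultimately show ?thesis unfolding case_pm1_def sim_def using NaNb ord(3) by auto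
      qed
      then have "\<not> sim A H La" using npm unfolding A_def by simp
      moreover have "H \<le> A * La"
    proof -
      have "C0 * La \<le> A * La" using AC0 pos by (intro mult_right_mono) auto
      then show ?thesis using HLa by simp
    qed
      ultimately have "La > A * H" unfolding sim_def by auto
      then have Y: "Y = H" unfolding Y_def by (rule big)
      define w where "w = 2 * c * Na"
      have w0: "w > 0" unfolding w_def using c0 pos by simp
      have "w * Nm\<^sup>2 = 2 * c * (Nn * Nm\<^sup>2)" unfolding w_def Nn_eq by simp
      also have "\<dots> \<le> 2 * c * (C0\<^sup>2 * H)" using KF c0 by (intro mult_left_mono) auto
      finally have "w * Nm\<^sup>2 \<le> 2 * c * C0\<^sup>2 * H" by (simp add: algebra_simps)
      then have wX: "w \<le> K3 * X\<^sup>2" by (rule small2[OF Y])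
      show ?thesis
      proof (cases "Lc \<le> Lb")
        case True
        have fh: "fibhyp c Nb Na Nc La Lc w" unfolding w_def by (rule fib_T[OF c0])
        have Qb: "Q \<le> ennreal (sqrt (2 * c * min La Lc * (2 * (2 * w + iota M))))" by (rule QOK_B[OF Q w0 fh])
        show ?thesis
          by (rule finish[OF br c0 Qb _ _ less_imp_le[OF w0] wX _ K30]) (use pos True ord in auto)
      next
        case False
        have fh: "fibhyp c Nc Na Nb La Lb w" unfolding w_def by (rule fib_T[OF c0])
        have Qb: "Q \<le> ennreal (sqrt (2 * c * min La Lb * (2 * (2 * w + iota M))))" by (rule QOK_C[OF Q w0 fh])
        show ?thesis
          by (rule finish[OF br c0 Qb _ _ less_imp_le[OF w0] wX _ K30]) (use pos False ord in auto)
      qed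
    qed
  qed
  then show ?thesis unfolding Lm_eq Ld_eq X_def Y_def Nm_def K3_def .
qed

lemma max3_p: "max3 b c a = max3 a b c" "max3 c a b = max3 a b c" "max3 c b a = max3 a b c"
  unfolding max3_def by linarith+
lemma min3_p: "min3 b c a = min3 a b c" "min3 c a b = min3 a b c" "min3 c b a = min3 a b c"
  unfolding min3_def by linarith+
lemma med3_p: "med3 b c a = med3 a b c" "med3 c a b = med3 a b c" "med3 c b a = med3 a b c"
  by (metis med3_12 med3_23)+

lemma std_facts:
  assumes "std_hyp C0 Na Nb Nc H La Lb Lc"
  shows "Na > 0" "Nb > 0" "Nc > 0" "La > 0" "Lb > 0" "Lc > 0" "H > 0"
    "max3 Na Nb Nc \<le> C0 * med3 Na Nb Nc"
    "max3 La Lb Lc \<le> C0 * max H (med3 La Lb Lc)" "max H (med3 La Lb Lc) \<le> C0 * max3 La Lb Lc"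
    "Na * Nb * Nc \<le> C0 * H"
  using assms unfolding std_hyp_def sim_def by auto

lemma wi:
  assumes br: "(M = lborel \<and> br = abs) \<or> (M = count_space \<int> \<and> br = (\<lambda>x. 1 + \<bar>x\<bar>))"
    and c: "c > 1" and C1: "C1 \<ge> 1" and Q: "QOK Q c M Na Nb Nc La Lb Lc"
    and std: "std_hyp C0 Na Nb Nc H La Lb Lc" and pp: "case_pp C1 Na Nb Nc H La Lb Lc"
    and ord: "Lb \<le> La" "Lc \<le> La"
  shows "Q \<le> ennreal (sqrt (4 * c * 1 * max (2 * (2 * c * C1)) 1) * sqrt (min3 La Lb Lc)
            * br (max3 Na Nb Nc powr (-1/4) * med3 La Lb Lc powr (1/4)))"
  using core_i[OF br _ C1 Q std_facts(1-6)[OF std] _ ord] c pp unfolding case_pp_def sim_def by auto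

lemma wii:
  assumes br: "(M = lborel \<and> br = abs) \<or> (M = count_space \<int> \<and> br = (\<lambda>x. 1 + \<bar>x\<bar>))"
    and c: "c > 1" and C0: "C0 \<ge> 1" and C1: "C1 \<ge> 1" and Q: "QOK Q c M Na Nb Nc La Lb Lc"
    and std: "std_hyp C0 Na Nb Nc H La Lb Lc" and pm: "case_pm1 C1 (c\<^sup>2) Na Nb Nc H La Lb Lc"
  shows "Q \<le> ennreal (sqrt (4 * c * C1 * max (2 * (2 * c ^ 3 * C0 * C1\<^sup>2)) 1) * sqrt (min3 La Lb Lc)
            * br (max3 Na Nb Nc powr (-1) * sqrt (min H (max3 Na Nb Nc / min3 Na Nb Nc * med3 La Lb Lc))))"
  by (rule core_ii[OF br c C0 C1 Q std_facts(1-7)[OF std] std_facts(11)[OF std] pm])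

lemma wiii0:
  assumes br: "(M = lborel \<and> br = abs) \<or> (M = count_space \<int> \<and> br = (\<lambda>x. 1 + \<bar>x\<bar>))"
    and c: "c > 1" and C0: "C0 \<ge> 1" and Q: "QOK Q c M Na Nb Nc La Lb Lc"
    and std: "std_hyp C0 Na Nb Nc H La Lb Lc"
    and npp: "\<not> case_pp (2 * c\<^sup>2 * C0) Na Nb Nc H La Lb Lc"
    and npm: "\<not> case_pm1 (2 * c\<^sup>2 * C0) 1 Na Nb Nc H La Lb Lc"
    and ord: "Lb \<le> La" "Lc \<le> La" "Nb \<le> Nc"
  shows "Q \<le> ennreal (sqrt (4 * c * 1 * max (2 * (8 * c ^ 3 * C0 ^ 3)) 1) * sqrt (min3 La Lb Lc)
            * br (max3 Na Nb Nc powr (-1) * sqrt (min H (med3 La Lb Lc))))"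
  by (rule core_iii[OF br c C0 Q std_facts[OF std] npp npm ord])

lemma wiii:
  assumes br: "(M = lborel \<and> br = abs) \<or> (M = count_space \<int> \<and> br = (\<lambda>x. 1 + \<bar>x\<bar>))"
    and c: "c > 1" and C0: "C0 \<ge> 1" and Q: "QOK Q c M Na Nb Nc La Lb Lc"
    and std: "std_hyp C0 Na Nb Nc H La Lb Lc"
    and npp: "\<not> case_pp (2 * c\<^sup>2 * C0) Na Nb Nc H La Lb Lc"
    and npm: "\<not> case_pm1 (2 * c\<^sup>2 * C0) 1 Na Nb Nc H La Lb Lc"
    and ord: "Lb \<le> La" "Lc \<le> La"
  shows "Q \<le> ennreal (sqrt (4 * c * 1 * max (2 * (8 * c ^ 3 * C0 ^ 3)) 1) * sqrt (min3 La Lb Lc)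
            * br (max3 Na Nb Nc powr (-1) * sqrt (min H (med3 La Lb Lc))))"
proof (cases "Nb \<le> Nc")
  case True
  show ?thesis by (rule wiii0[OF br c C0 Q std npp npm ord True])
next
  case False
  have "Q \<le> ennreal (sqrt (4 * c * 1 * max (2 * (8 * c ^ 3 * C0 ^ 3)) 1) * sqrt (min3 La Lc Lb)
            * br (max3 Na Nc Nb powr (-1) * sqrt (min H (med3 La Lc Lb))))"
    by (rule wiii0[OF br c C0 QOK_23[OF Q] std_23[OF std]])
       (use npp npm ord False pp_23 pm1_23 in auto)
  then show ?thesis by (simp add: max3_23 min3_23 med3_23)
qed

theorem mainTheorem1:
  fixes M :: "real measure" and br :: "real \<Rightarrow> real" and c :: real
  assumes Z: "(M = lborel \<and> br = abs) \<or> (M = count_space \<int> \<and> br = (\<lambda>x. 1 + \<bar>x\<bar>))"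
    and c: "c > 1"
  shows "\<forall>C0\<ge>1.
    (\<forall>C1\<ge>1. \<exists>C>0. \<forall>N1 N2 N3 H L1 L2 L3.
        std_hyp C0 N1 N2 N3 H L1 L2 L3 \<and> case_pp C1 N1 N2 N3 H L1 L2 L3 \<longrightarrow>
        mult_norm3 M (Xmult c (\<lambda>x. x ^ 3) (\<lambda>x. x ^ 3) (\<lambda>x. x ^ 3) N1 N2 N3 H L1 L2 L3)
          \<le> ennreal (C * sqrt (min3 L1 L2 L3)
                 * br (max3 N1 N2 N3 powr (-1/4) * med3 L1 L2 L3 powr (1/4))))
  \<and> (\<forall>C1\<ge>1. \<exists>K\<ge>1. \<exists>C>0. \<forall>N1 N2 N3 H L1 L2 L3.
        std_hyp C0 N1 N2 N3 H L1 L2 L3 \<and> case_pm C1 K N1 N2 N3 H L1 L2 L3 \<longrightarrow>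
        mult_norm3 M (Xmult c (\<lambda>x. x ^ 3) (\<lambda>x. x ^ 3) (\<lambda>x. x ^ 3) N1 N2 N3 H L1 L2 L3)
          \<le> ennreal (C * sqrt (min3 L1 L2 L3)
                 * br (max3 N1 N2 N3 powr (-1)
                       * sqrt (min H (max3 N1 N2 N3 / min3 N1 N2 N3 * med3 L1 L2 L3)))))
  \<and> (\<exists>A\<ge>1. \<exists>K\<ge>1. \<exists>C>0. \<forall>N1 N2 N3 H L1 L2 L3.
        std_hyp C0 N1 N2 N3 H L1 L2 L3 \<and> \<not> case_pp A N1 N2 N3 H L1 L2 L3
          \<and> \<not> case_pm A K N1 N2 N3 H L1 L2 L3 \<longrightarrow>
        mult_norm3 M (Xmult c (\<lambda>x. x ^ 3) (\<lambda>x. x ^ 3) (\<lambda>x. x ^ 3) N1 N2 N3 H L1 L2 L3)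
          \<le> ennreal (C * sqrt (min3 L1 L2 L3)
                 * br (max3 N1 N2 N3 powr (-1) * sqrt (min H (med3 L1 L2 L3)))))"
proof (intro allI impI)
  fix C0 :: real assume C0: "C0 \<ge> 1"
  have okM: "okM M" by (rule br_facts(1)[OF Z])
  have c0: "c > 0" using c by simp
  have c2: "c\<^sup>2 \<ge> 1"
  proof -
    have "1 * 1 \<le> c * c" using c by (intro mult_mono) auto
    then show ?thesis by (simp add: power2_eq_square)
  qed
  have QX: "QOK (mult_norm3 M (Xmult c cub cub cub N1 N2 N3 H L1 L2 L3)) c M N1 N2 N3 L1 L2 L3"
    if "std_hyp C0 N1 N2 N3 H L1 L2 L3" for N1 N2 N3 H L1 L2 L3
    by (rule QOK_X[OF okM c0 std_facts(4-6)[OF that]])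
  show "(\<forall>C1\<ge>1. \<exists>C>0. \<forall>N1 N2 N3 H L1 L2 L3.
        std_hyp C0 N1 N2 N3 H L1 L2 L3 \<and> case_pp C1 N1 N2 N3 H L1 L2 L3 \<longrightarrow>
        mult_norm3 M (Xmult c (\<lambda>x. x ^ 3) (\<lambda>x. x ^ 3) (\<lambda>x. x ^ 3) N1 N2 N3 H L1 L2 L3)
          \<le> ennreal (C * sqrt (min3 L1 L2 L3)
                 * br (max3 N1 N2 N3 powr (-1/4) * med3 L1 L2 L3 powr (1/4))))
  \<and> (\<forall>C1\<ge>1. \<exists>K\<ge>1. \<exists>C>0. \<forall>N1 N2 N3 H L1 L2 L3.
        std_hyp C0 N1 N2 N3 H L1 L2 L3 \<and> case_pm C1 K N1 N2 N3 H L1 L2 L3 \<longrightarrow>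
        mult_norm3 M (Xmult c (\<lambda>x. x ^ 3) (\<lambda>x. x ^ 3) (\<lambda>x. x ^ 3) N1 N2 N3 H L1 L2 L3)
          \<le> ennreal (C * sqrt (min3 L1 L2 L3)
                 * br (max3 N1 N2 N3 powr (-1)
                       * sqrt (min H (max3 N1 N2 N3 / min3 N1 N2 N3 * med3 L1 L2 L3)))))
  \<and> (\<exists>A\<ge>1. \<exists>K\<ge>1. \<exists>C>0. \<forall>N1 N2 N3 H L1 L2 L3.
        std_hyp C0 N1 N2 N3 H L1 L2 L3 \<and> \<not> case_pp A N1 N2 N3 H L1 L2 L3
          \<and> \<not> case_pm A K N1 N2 N3 H L1 L2 L3 \<longrightarrow>
        mult_norm3 M (Xmult c (\<lambda>x. x ^ 3) (\<lambda>x. x ^ 3) (\<lambda>x. x ^ 3) N1 N2 N3 H L1 L2 L3)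
          \<le> ennreal (C * sqrt (min3 L1 L2 L3)
                 * br (max3 N1 N2 N3 powr (-1) * sqrt (min H (med3 L1 L2 L3)))))"
  proof (intro conjI)
    show "\<forall>C1\<ge>1. \<exists>C>0. \<forall>N1 N2 N3 H L1 L2 L3.
        std_hyp C0 N1 N2 N3 H L1 L2 L3 \<and> case_pp C1 N1 N2 N3 H L1 L2 L3 \<longrightarrow>
        mult_norm3 M (Xmult c (\<lambda>x. x ^ 3) (\<lambda>x. x ^ 3) (\<lambda>x. x ^ 3) N1 N2 N3 H L1 L2 L3)
          \<le> ennreal (C * sqrt (min3 L1 L2 L3)
                 * br (max3 N1 N2 N3 powr (-1/4) * med3 L1 L2 L3 powr (1/4)))"
    proof (intro allI impI)
      fix C1 :: real assume C1: "C1 \<ge> 1"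
      define C where "C = sqrt (4 * c * 1 * max (2 * (2 * c * C1)) 1)"
      have Cpos: "C > 0" unfolding C_def using c by simp
      show "\<exists>C>0. \<forall>N1 N2 N3 H L1 L2 L3.
        std_hyp C0 N1 N2 N3 H L1 L2 L3 \<and> case_pp C1 N1 N2 N3 H L1 L2 L3 \<longrightarrow>
        mult_norm3 M (Xmult c (\<lambda>x. x ^ 3) (\<lambda>x. x ^ 3) (\<lambda>x. x ^ 3) N1 N2 N3 H L1 L2 L3)
          \<le> ennreal (C * sqrt (min3 L1 L2 L3)
                 * br (max3 N1 N2 N3 powr (-1/4) * med3 L1 L2 L3 powr (1/4)))"
      proof (intro exI[of _ C] conjI Cpos allI impI)
        fix N1 N2 N3 H L1 L2 L3
        assume A: "std_hyp C0 N1 N2 N3 H L1 L2 L3 \<and> case_pp C1 N1 N2 N3 H L1 L2 L3"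
        then have std: "std_hyp C0 N1 N2 N3 H L1 L2 L3" and pp: "case_pp C1 N1 N2 N3 H L1 L2 L3" by auto
        have Q: "QOK (mult_norm3 M (Xmult c cub cub cub N1 N2 N3 H L1 L2 L3)) c M N1 N2 N3 L1 L2 L3"
          by (rule QX[OF std])
        show "mult_norm3 M (Xmult c (\<lambda>x. x ^ 3) (\<lambda>x. x ^ 3) (\<lambda>x. x ^ 3) N1 N2 N3 H L1 L2 L3)
          \<le> ennreal (C * sqrt (min3 L1 L2 L3)
                 * br (max3 N1 N2 N3 powr (-1/4) * med3 L1 L2 L3 powr (1/4)))"
        proof (cases "L2 \<le> L1 \<and> L3 \<le> L1")
          case True
          then show ?thesis using wi[OF Z c C1 Q std pp] unfolding C_def by auto
        next
          case F1: False
          show ?thesis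
          proof (cases "L1 \<le> L2 \<and> L3 \<le> L2")
            case True
            have pp': "case_pp C1 N2 N1 N3 H L2 L1 L3" using pp pp_12[of C1 N1 N2 N3 H L1 L2 L3] by simp
            have "mult_norm3 M (Xmult c cub cub cub N1 N2 N3 H L1 L2 L3)
              \<le> ennreal (C * sqrt (min3 L2 L1 L3) * br (max3 N2 N1 N3 powr (-1/4) * med3 L2 L1 L3 powr (1/4)))"
              using wi[OF Z c C1 QOK_12[OF Q] std_12[OF std] pp'] True unfolding C_def by auto
            then show ?thesis by (simp add: max3_12[where a=N1 and b=N2 and c=N3] min3_12[where a=L1 and b=L2 and c=L3] med3_12[where a=L1 and b=L2 and c=L3])
          next
            case False
            then have o: "L1 \<le> L3" "L2 \<le> L3" using F1 by auto
            have pp': "case_pp C1 N3 N1 N2 H L3 L1 L2"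
              using pp pp_23[of C1 N1 N2 N3 H L1 L2 L3] pp_12[of C1 N1 N3 N2 H L1 L3 L2] by simp
            have "mult_norm3 M (Xmult c cub cub cub N1 N2 N3 H L1 L2 L3)
              \<le> ennreal (C * sqrt (min3 L3 L1 L2) * br (max3 N3 N1 N2 powr (-1/4) * med3 L3 L1 L2 powr (1/4)))"
              using wi[OF Z c C1 QOK_12[OF QOK_23[OF Q]] std_12[OF std_23[OF std]] pp'] o unfolding C_def by auto
            then show ?thesis by (simp add: max3_p(2)[where a=N1 and b=N2 and c=N3] min3_p(2)[where a=L1 and b=L2 and c=L3] med3_p(2)[where a=L1 and b=L2 and c=L3])
          qed
        qed
      qed
    qed
  next
    show "\<forall>C1\<ge>1. \<exists>K\<ge>1. \<exists>C>0. \<forall>N1 N2 N3 H L1 L2 L3.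
        std_hyp C0 N1 N2 N3 H L1 L2 L3 \<and> case_pm C1 K N1 N2 N3 H L1 L2 L3 \<longrightarrow>
        mult_norm3 M (Xmult c (\<lambda>x. x ^ 3) (\<lambda>x. x ^ 3) (\<lambda>x. x ^ 3) N1 N2 N3 H L1 L2 L3)
          \<le> ennreal (C * sqrt (min3 L1 L2 L3)
                 * br (max3 N1 N2 N3 powr (-1)
                       * sqrt (min H (max3 N1 N2 N3 / min3 N1 N2 N3 * med3 L1 L2 L3))))"
    proof (intro allI impI)
      fix C1 :: real assume C1: "C1 \<ge> 1"
      define C where "C = sqrt (4 * c * C1 * max (2 * (2 * c ^ 3 * C0 * C1\<^sup>2)) 1)"
      have Cpos: "C > 0" unfolding C_def using c C1 by simp
      show "\<exists>K\<ge>1. \<exists>C>0. \<forall>N1 N2 N3 H L1 L2 L3.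
        std_hyp C0 N1 N2 N3 H L1 L2 L3 \<and> case_pm C1 K N1 N2 N3 H L1 L2 L3 \<longrightarrow>
        mult_norm3 M (Xmult c (\<lambda>x. x ^ 3) (\<lambda>x. x ^ 3) (\<lambda>x. x ^ 3) N1 N2 N3 H L1 L2 L3)
          \<le> ennreal (C * sqrt (min3 L1 L2 L3)
                 * br (max3 N1 N2 N3 powr (-1)
                       * sqrt (min H (max3 N1 N2 N3 / min3 N1 N2 N3 * med3 L1 L2 L3))))"
      proof (rule exI[of _ "c\<^sup>2"], intro conjI c2, rule exI[of _ C], intro conjI Cpos allI impI)
        fix N1 N2 N3 H L1 L2 L3
        assume A: "std_hyp C0 N1 N2 N3 H L1 L2 L3 \<and> case_pm C1 (c\<^sup>2) N1 N2 N3 H L1 L2 L3"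
        then have std: "std_hyp C0 N1 N2 N3 H L1 L2 L3" and pm: "case_pm C1 (c\<^sup>2) N1 N2 N3 H L1 L2 L3" by auto
        have Q: "QOK (mult_norm3 M (Xmult c cub cub cub N1 N2 N3 H L1 L2 L3)) c M N1 N2 N3 L1 L2 L3"
          by (rule QX[OF std])
        show "mult_norm3 M (Xmult c (\<lambda>x. x ^ 3) (\<lambda>x. x ^ 3) (\<lambda>x. x ^ 3) N1 N2 N3 H L1 L2 L3)
          \<le> ennreal (C * sqrt (min3 L1 L2 L3)
                 * br (max3 N1 N2 N3 powr (-1)
                       * sqrt (min H (max3 N1 N2 N3 / min3 N1 N2 N3 * med3 L1 L2 L3))))"
        proof (cases "case_pm1 C1 (c\<^sup>2) N1 N2 N3 H L1 L2 L3")
          case True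
          then show ?thesis using wii[OF Z c C0 C1 Q std] unfolding C_def by auto
        next
          case F1: False
          show ?thesis
          proof (cases "case_pm1 C1 (c\<^sup>2) N2 N1 N3 H L2 L1 L3")
            case True
            have "mult_norm3 M (Xmult c cub cub cub N1 N2 N3 H L1 L2 L3)
              \<le> ennreal (C * sqrt (min3 L2 L1 L3) * br (max3 N2 N1 N3 powr (-1)
                   * sqrt (min H (max3 N2 N1 N3 / min3 N2 N1 N3 * med3 L2 L1 L3))))"
              using wii[OF Z c C0 C1 QOK_12[OF Q] std_12[OF std] True] unfolding C_def by auto
            then show ?thesis
              by (simp add: max3_12[where a=N1 and b=N2 and c=N3] min3_12[where a=N1 and b=N2 and c=N3] min3_12[where a=L1 and b=L2 and c=L3] med3_12[where a=L1 and b=L2 and c=L3])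
          next
            case False
            then have pm3: "case_pm1 C1 (c\<^sup>2) N3 N1 N2 H L3 L1 L2" using pm F1 unfolding case_pm_def by auto
            have "mult_norm3 M (Xmult c cub cub cub N1 N2 N3 H L1 L2 L3)
              \<le> ennreal (C * sqrt (min3 L3 L1 L2) * br (max3 N3 N1 N2 powr (-1)
                   * sqrt (min H (max3 N3 N1 N2 / min3 N3 N1 N2 * med3 L3 L1 L2))))"
              using wii[OF Z c C0 C1 QOK_12[OF QOK_23[OF Q]] std_12[OF std_23[OF std]] pm3] unfolding C_def by auto
            then show ?thesis
              by (simp add: max3_p(2)[where a=N1 and b=N2 and c=N3] min3_p(2)[where a=N1 and b=N2 and c=N3] min3_p(2)[where a=L1 and b=L2 and c=L3] med3_p(2)[where a=L1 and b=L2 and c=L3])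
          qed
        qed
      qed
    qed
  next
    define A where "A = 2 * c\<^sup>2 * C0"
    define C where "C = sqrt (4 * c * 1 * max (2 * (8 * c ^ 3 * C0 ^ 3)) 1)"
    have A1: "A \<ge> 1"
    proof -
      have "1 * 1 \<le> c\<^sup>2 * C0" using c2 C0 by (intro mult_mono) auto
      then show ?thesis unfolding A_def by simp
    qed
    have Cpos: "C > 0" unfolding C_def using c by simp
    show "\<exists>A\<ge>1. \<exists>K\<ge>1. \<exists>C>0. \<forall>N1 N2 N3 H L1 L2 L3.
        std_hyp C0 N1 N2 N3 H L1 L2 L3 \<and> \<not> case_pp A N1 N2 N3 H L1 L2 L3
          \<and> \<not> case_pm A K N1 N2 N3 H L1 L2 L3 \<longrightarrow>
        mult_norm3 M (Xmult c (\<lambda>x. x ^ 3) (\<lambda>x. x ^ 3) (\<lambda>x. x ^ 3) N1 N2 N3 H L1 L2 L3)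
          \<le> ennreal (C * sqrt (min3 L1 L2 L3)
                 * br (max3 N1 N2 N3 powr (-1) * sqrt (min H (med3 L1 L2 L3))))"
    proof (rule exI[of _ A], intro conjI A1, rule exI[of _ "1::real"], intro conjI order.refl, rule exI[of _ C], intro conjI Cpos allI impI)
      fix N1 N2 N3 H L1 L2 L3
      assume As: "std_hyp C0 N1 N2 N3 H L1 L2 L3 \<and> \<not> case_pp A N1 N2 N3 H L1 L2 L3
          \<and> \<not> case_pm A 1 N1 N2 N3 H L1 L2 L3"
      then have std: "std_hyp C0 N1 N2 N3 H L1 L2 L3" and npp: "\<not> case_pp A N1 N2 N3 H L1 L2 L3"
        and npm: "\<not> case_pm A 1 N1 N2 N3 H L1 L2 L3" by auto
      have npm1: "\<not> case_pm1 (2 * c\<^sup>2 * C0) 1 N1 N2 N3 H L1 L2 L3"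
        "\<not> case_pm1 (2 * c\<^sup>2 * C0) 1 N2 N1 N3 H L2 L1 L3"
        "\<not> case_pm1 (2 * c\<^sup>2 * C0) 1 N3 N1 N2 H L3 L1 L2"
        using npm unfolding case_pm_def A_def by auto
      have npp0: "\<not> case_pp (2 * c\<^sup>2 * C0) N1 N2 N3 H L1 L2 L3" using npp unfolding A_def .
      have Q: "QOK (mult_norm3 M (Xmult c cub cub cub N1 N2 N3 H L1 L2 L3)) c M N1 N2 N3 L1 L2 L3"
        by (rule QX[OF std])
      show "mult_norm3 M (Xmult c (\<lambda>x. x ^ 3) (\<lambda>x. x ^ 3) (\<lambda>x. x ^ 3) N1 N2 N3 H L1 L2 L3)
          \<le> ennreal (C * sqrt (min3 L1 L2 L3)
                 * br (max3 N1 N2 N3 powr (-1) * sqrt (min H (med3 L1 L2 L3))))"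
      proof (cases "L2 \<le> L1 \<and> L3 \<le> L1")
        case True
        then show ?thesis using wiii[OF Z c C0 Q std npp0 npm1(1)] unfolding C_def by auto
      next
        case F1: False
        show ?thesis
        proof (cases "L1 \<le> L2 \<and> L3 \<le> L2")
          case True
          have pp': "\<not> case_pp (2 * c\<^sup>2 * C0) N2 N1 N3 H L2 L1 L3"
            using npp0 pp_12[of "2 * c\<^sup>2 * C0" N1 N2 N3 H L1 L2 L3] by simp
          have "mult_norm3 M (Xmult c cub cub cub N1 N2 N3 H L1 L2 L3)
            \<le> ennreal (C * sqrt (min3 L2 L1 L3) * br (max3 N2 N1 N3 powr (-1) * sqrt (min H (med3 L2 L1 L3))))"
            using wiii[OF Z c C0 QOK_12[OF Q] std_12[OF std] pp' npm1(2)] True unfolding C_def by auto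
          then show ?thesis by (simp add: max3_12[where a=N1 and b=N2 and c=N3] min3_12[where a=L1 and b=L2 and c=L3] med3_12[where a=L1 and b=L2 and c=L3])
        next
          case False
          then have o: "L1 \<le> L3" "L2 \<le> L3" using F1 by auto
          have pp': "\<not> case_pp (2 * c\<^sup>2 * C0) N3 N1 N2 H L3 L1 L2"
            using npp0 pp_23[of "2 * c\<^sup>2 * C0" N1 N2 N3 H L1 L2 L3] pp_12[of "2 * c\<^sup>2 * C0" N1 N3 N2 H L1 L3 L2] by simp
          have "mult_norm3 M (Xmult c cub cub cub N1 N2 N3 H L1 L2 L3)
            \<le> ennreal (C * sqrt (min3 L3 L1 L2) * br (max3 N3 N1 N2 powr (-1) * sqrt (min H (med3 L3 L1 L2))))"
            using wiii[OF Z c C0 QOK_12[OF QOK_23[OF Q]] std_12[OF std_23[OF std]] pp' npm1(3)] o unfolding C_def by auto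
          then show ?thesis by (simp add: max3_p(2)[where a=N1 and b=N2 and c=N3] min3_p(2)[where a=L1 and b=L2 and c=L3] med3_p(2)[where a=L1 and b=L2 and c=L3])
        qed
      qed
    qed
  qed
qed

end
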